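(* Let $\Sigma_1,\Sigma_2$ be amply equivalent complete fans, $G_i=\mathrm{Hom}_{\mathbf Z}(\mathrm{Cl}(X_{\Sigma_i}),\mathbf C^\times)$, and $\varphi:\Gamma(G_1)_{\mathbf Q}\to\Gamma(G_2)_{\mathbf Q}$ the isomorphism induced by $\Psi$. Then the dual map $\varphi^*:\mathrm{Cl}(X_{\Sigma_2})_{\mathbf Q}\to\mathrm{Cl}(X_{\Sigma_1})_{\mathbf Q}$ is an isomorphism that restricts to an isomorphism $\mathrm{Pic}(X_{\Sigma_2})_{\mathbf Q}\cong\mathrm{Pic}(X_{\Sigma_1})_{\mathbf Q}$, and $\varphi^*(\mathrm{Amp}(X_{\Sigma_2})_{\mathbf Q})=\mathrm{Amp}(X_{\Sigma_1})_{\mathbf Q}$.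
   Context: For a fan $\Sigma$: rays $\Sigma(1)$, primitive generators $u_\rho$, torus-invariant divisors $D_\rho$. A primitive collection is $C\subset\Sigma(1)$ not contained in $\sigma(1)$ for any cone $\sigma$ while every proper subset is. Complete fans $\Sigma_1\subset(N_1)_{\mathbf R}$, $\Sigma_2\subset(N_2)_{\mathbf R}$ with $\mathrm{rank}N_1=\mathrm{rank}N_2$ are amply equivalent via a bijection $\Psi:\Sigma_1(1)\to\Sigma_2(1)$ if $\Psi$ maps primitive collections exactly onto primitive collections and, for all integers $(a_\rho)$, $\sum a_\rho u_\rho=0\iff\sum a_\rho u_{\Psi(\rho)}=0$. $\Gamma(G_i)=\{b\in\mathbf Z^{\Sigma_i(1)}:\sum b_\rho u_\rho=0\}$; $\varphi$ sends $(b_\rho)_{\rho\in\Sigma_1(1)}$ to $(b_{\Psi^{-1}(\rho')})_{\rho'\in\Sigma_2(1)}$. Under the perfect pairings $\mathrm{Cl}(X_{\Sigma_i})_{\mathbf Q}\times\Gamma(G_i)_{\mathbf Q}\to\mathbf Q$, $\langle\sum a_\rho D_\rho,b\rangle=\sum a_\rho b_\rho$, the dual $\varphi^*$ sends the class of $\sum_\rho q_\rho D_{\Psi(\rho)}$ to the class of $\sum_\rho q_\rho D_\rho$. $\mathrm{Amp}(X)_{\mathbf Q}$ is the rational cone over ample Cartier divisors in $\mathrm{Pic}(X)_{\mathbf Q}$. *)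

theory Defs
  imports "HOL-Analysis.Analysis"
begin

text \<open>Lattice N = Z^n inside N_R = R^n (dimension given by the finite type 'n).
  Cones of a fan are subsets of real^'n; a ray is identified with the 1-dimensional cone.\<close>

definition lattice :: "(real^'n) set" where
  "lattice = {x. \<forall>i. x $ i \<in> \<int>}"

definition rational_cone :: "(real^'n) set \<Rightarrow> bool" where
  "rational_cone \<sigma> \<longleftrightarrow> (\<exists>S. finite S \<and> S \<subseteq> lattice \<and> \<sigma> = convex_cone hull S)"

definition strongly_convex :: "(real^'n) set \<Rightarrow> bool" where
  "strongly_convex \<sigma> \<longleftrightarrow> \<sigma> \<inter> uminus ` \<sigma> = {0}"

definition is_fan :: "(real^'n) set set \<Rightarrow> bool" where
  "is_fan \<Sigma> \<longleftrightarrow> finite \<Sigma> \<and> \<Sigma> \<noteq> {} \<and>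
     (\<forall>\<sigma>\<in>\<Sigma>. rational_cone \<sigma> \<and> strongly_convex \<sigma>) \<and>
     (\<forall>\<sigma>\<in>\<Sigma>. \<forall>\<tau>. \<tau> face_of \<sigma> \<and> \<tau> \<noteq> {} \<longrightarrow> \<tau> \<in> \<Sigma>) \<and>
     (\<forall>\<sigma>\<in>\<Sigma>. \<forall>\<tau>\<in>\<Sigma>. (\<sigma> \<inter> \<tau>) face_of \<sigma> \<and> (\<sigma> \<inter> \<tau>) face_of \<tau>)"

definition complete_fan :: "(real^'n) set set \<Rightarrow> bool" where
  "complete_fan \<Sigma> \<longleftrightarrow> is_fan \<Sigma> \<and> \<Union>\<Sigma> = UNIV"

definition rays :: "(real^'n) set set \<Rightarrow> (real^'n) set set" where
  "rays \<Sigma> = {\<rho>\<in>\<Sigma>. aff_dim \<rho> = 1}"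

definition cone_rays :: "(real^'n) set set \<Rightarrow> (real^'n) set \<Rightarrow> (real^'n) set set" where
  "cone_rays \<Sigma> \<sigma> = {\<rho>\<in>rays \<Sigma>. \<rho> \<subseteq> \<sigma>}"

definition prim_gen :: "(real^'n) set \<Rightarrow> real^'n" where
  "prim_gen \<rho> = (THE u. u \<in> \<rho> \<and> u \<in> lattice \<and> u \<noteq> 0 \<and>
                        (\<forall>v\<in>\<rho> \<inter> lattice. \<exists>k::nat. v = real k *\<^sub>R u))"

definition primitive_collection :: "(real^'n) set set \<Rightarrow> (real^'n) set set \<Rightarrow> bool" where
  "primitive_collection \<Sigma> C \<longleftrightarrow> C \<subseteq> rays \<Sigma> \<and>
     (\<forall>\<sigma>\<in>\<Sigma>. \<not> C \<subseteq> cone_rays \<Sigma> \<sigma>) \<and>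
     (\<forall>C'. C' \<subset> C \<longrightarrow> (\<exists>\<sigma>\<in>\<Sigma>. C' \<subseteq> cone_rays \<Sigma> \<sigma>))"

definition amply_equivalent ::
  "(real^'n) set set \<Rightarrow> (real^'n) set set \<Rightarrow> ((real^'n) set \<Rightarrow> (real^'n) set) \<Rightarrow> bool" where
  "amply_equivalent \<Sigma>1 \<Sigma>2 \<Psi> \<longleftrightarrow>
     complete_fan \<Sigma>1 \<and> complete_fan \<Sigma>2 \<and>
     bij_betw \<Psi> (rays \<Sigma>1) (rays \<Sigma>2) \<and>
     (\<forall>C. C \<subseteq> rays \<Sigma>1 \<longrightarrow>
          (primitive_collection \<Sigma>1 C \<longleftrightarrow> primitive_collection \<Sigma>2 (\<Psi> ` C))) \<and>
     (\<forall>a :: (real^'n) set \<Rightarrow> int.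
        (\<Sum>\<rho>\<in>rays \<Sigma>1. of_int (a \<rho>) *\<^sub>R prim_gen \<rho>) = 0 \<longleftrightarrow>
        (\<Sum>\<rho>\<in>rays \<Sigma>1. of_int (a \<rho>) *\<^sub>R prim_gen (\<Psi> \<rho>)) = 0)"

text \<open>Torus-invariant Q-divisors \<Sum> a_\<rho> D_\<rho>, as coefficient functions supported on \<Sigma>(1).\<close>
definition Qdiv :: "(real^'n) set set \<Rightarrow> ((real^'n) set \<Rightarrow> real) \<Rightarrow> bool" where
  "Qdiv \<Sigma> a \<longleftrightarrow> (\<forall>\<rho>. a \<rho> \<in> \<rat>) \<and> (\<forall>\<rho>. \<rho> \<notin> rays \<Sigma> \<longrightarrow> a \<rho> = 0)"

text \<open>div(\<chi>^m) = \<Sum> <m,u_\<rho>> D_\<rho>, m \<in> M_Q\<close>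
definition principal :: "(real^'n) set set \<Rightarrow> ((real^'n) set \<Rightarrow> real) \<Rightarrow> bool" where
  "principal \<Sigma> d \<longleftrightarrow> (\<exists>m::real^'n. (\<forall>i. m $ i \<in> \<rat>) \<and>
       (\<forall>\<rho>\<in>rays \<Sigma>. d \<rho> = inner m (prim_gen \<rho>)))"

definition cls :: "(real^'n) set set \<Rightarrow> ((real^'n) set \<Rightarrow> real) \<Rightarrow> ((real^'n) set \<Rightarrow> real) set" where
  "cls \<Sigma> a = {b. Qdiv \<Sigma> b \<and> principal \<Sigma> (\<lambda>\<rho>. b \<rho> - a \<rho>)}"

definition ClQ :: "(real^'n) set set \<Rightarrow> ((real^'n) set \<Rightarrow> real) set set" where
  "ClQ \<Sigma> = cls \<Sigma> ` {a. Qdiv \<Sigma> a}"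

text \<open>integral torus-invariant Cartier divisors: local data m_\<sigma> \<in> M with <m_\<sigma>,u_\<rho>> = -a_\<rho>\<close>
definition cartier :: "(real^'n) set set \<Rightarrow> ((real^'n) set \<Rightarrow> real) \<Rightarrow> bool" where
  "cartier \<Sigma> D \<longleftrightarrow> (\<forall>\<rho>. D \<rho> \<in> \<int>) \<and> (\<forall>\<rho>. \<rho> \<notin> rays \<Sigma> \<longrightarrow> D \<rho> = 0) \<and>
     (\<forall>\<sigma>\<in>\<Sigma>. \<exists>m\<in>lattice. \<forall>\<rho>\<in>cone_rays \<Sigma> \<sigma>. inner m (prim_gen \<rho>) = - D \<rho>)"

text \<open>ampleness of a Cartier divisor on a complete toric variety (strict convexity of the
  support function): for each maximal cone \<sigma>, <m_\<sigma>,u_\<rho>> > -a_\<rho> for \<rho> \<notin> \<sigma>(1).\<close>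
definition ample :: "(real^'n) set set \<Rightarrow> ((real^'n) set \<Rightarrow> real) \<Rightarrow> bool" where
  "ample \<Sigma> D \<longleftrightarrow> (\<forall>\<sigma>\<in>\<Sigma>. aff_dim \<sigma> = int CARD('n) \<longrightarrow>
     (\<exists>m\<in>lattice. \<forall>\<rho>\<in>rays \<Sigma>.
        (\<rho> \<subseteq> \<sigma> \<longrightarrow> inner m (prim_gen \<rho>) = - D \<rho>) \<and>
        (\<not> \<rho> \<subseteq> \<sigma> \<longrightarrow> inner m (prim_gen \<rho>) > - D \<rho>)))"

text \<open>Pic(X)_Q = image of Pic(X) \<otimes> Q in Cl(X)_Q\<close>
definition PicQ :: "(real^'n) set set \<Rightarrow> ((real^'n) set \<Rightarrow> real) set set" where
  "PicQ \<Sigma> = {cls \<Sigma> (\<lambda>\<rho>. q * D \<rho>) | q D. q \<in> \<rat> \<and> cartier \<Sigma> D}"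

definition AmpQ :: "(real^'n) set set \<Rightarrow> ((real^'n) set \<Rightarrow> real) set set" where
  "AmpQ \<Sigma> = {cls \<Sigma> (\<lambda>\<rho>. q * D \<rho>) | q D. q \<in> \<rat> \<and> q > 0 \<and> cartier \<Sigma> D \<and> ample \<Sigma> D}"

definition pullback :: "(real^'n) set set \<Rightarrow> ((real^'n) set \<Rightarrow> (real^'n) set)
     \<Rightarrow> ((real^'n) set \<Rightarrow> real) \<Rightarrow> ((real^'n) set \<Rightarrow> real)" where
  "pullback \<Sigma>1 \<Psi> a = (\<lambda>\<rho>. if \<rho> \<in> rays \<Sigma>1 then a (\<Psi> \<rho>) else 0)"

definition phi_star :: "(real^'n) set set \<Rightarrow> ((real^'n) set \<Rightarrow> (real^'n) set)
     \<Rightarrow> ((real^'n) set \<Rightarrow> real) set \<Rightarrow> ((real^'n) set \<Rightarrow> real) set" where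
  "phi_star \<Sigma>1 \<Psi> c = pullback \<Sigma>1 \<Psi> ` c"

end

theory Submission
  imports Defs
begin

lemma lattice_diff: "x \<in> lattice \<Longrightarrow> y \<in> lattice \<Longrightarrow> x - y \<in> lattice"
  by (auto simp: lattice_def)
lemma lattice_scale_int: "x \<in> lattice \<Longrightarrow> c \<in> \<int> \<Longrightarrow> c *\<^sub>R x \<in> lattice"
  by (auto simp: lattice_def)

lemma prim_gen_exists:
  fixes v :: "real^'n"
  assumes v: "v \<in> lattice" "v \<noteq> 0"
  shows "\<exists>u. u \<in> {t *\<^sub>R v |t. t \<ge> 0} \<and> u \<in> lattice \<and> u \<noteq> 0 \<and>
            (\<forall>w\<in>{t *\<^sub>R v |t. t \<ge> 0} \<inter> lattice. \<exists>k::nat. w = real k *\<^sub>R u)"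
proof -
  obtain i where vi: "v $ i \<noteq> 0" using v(2) by (metis vec_eq_iff zero_index)
  have viZ: "v $ i \<in> \<int>" using v(1) by (auto simp: lattice_def)
  define a where "a = \<bar>v $ i\<bar>"
  have a0: "a > 0" using vi by (simp add: a_def)
  have aZ: "a \<in> \<int>" using viZ by (simp add: a_def)
  define K where "K = {k::nat. k > 0 \<and> (real k / a) *\<^sub>R v \<in> lattice}"
  obtain an where an: "a = real an"
  proof -
    obtain z where z: "a = of_int z" using aZ by (auto elim: Ints_cases)
    hence "z \<ge> 0" using a0 by simp
    hence "a = real (nat z)" using z by simp
    thus ?thesis using that by blast
  qed
  have "an \<in> K" using an a0 v(1) by (simp add: K_def)
  then obtain k0 where k0: "k0 \<in> K" "\<And>k. k \<in> K \<Longrightarrow> k0 \<le> k"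
    using LeastI[of "\<lambda>k. k \<in> K"] Least_le[of "\<lambda>k. k \<in> K"] by blast
  define t0 where "t0 = real k0 / a"
  have t0: "t0 > 0" using k0(1) a0 by (simp add: K_def t0_def)
  define u where "u = t0 *\<^sub>R v"
  have uL: "u \<in> lattice" using k0(1) by (simp add: K_def u_def t0_def)
  show ?thesis
  proof (rule exI[of _ u], intro conjI ballI)
    show "u \<in> {t *\<^sub>R v |t. t \<ge> 0}" using t0 by (auto simp: u_def)
    show "u \<in> lattice" by (rule uL)
    show "u \<noteq> 0" using t0 v(2) by (simp add: u_def)
    fix w assume "w \<in> {t *\<^sub>R v |t. t \<ge> 0} \<inter> lattice"
    then obtain t where t: "t \<ge> 0" "w = t *\<^sub>R v" "w \<in> lattice" by auto
    define q where "q = nat \<lfloor>t / t0\<rfloor>"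
    have q: "real q \<le> t / t0" "t / t0 < real q + 1"
      using t(1) t0 by (auto simp: q_def)
    define r where "r = t - real q * t0"
    have r: "0 \<le> r" "r < t0" using q t0 by (auto simp: r_def field_simps)
    have "r *\<^sub>R v = w - real q *\<^sub>R u"
      by (simp add: r_def t u_def algebra_simps)
    hence rL: "r *\<^sub>R v \<in> lattice"
      using lattice_diff[OF t(3) lattice_scale_int[OF uL]] by simp
    have "r = 0"
    proof (rule ccontr)
      assume "r \<noteq> 0"
      hence r0: "r > 0" using r by simp
      have "r * v $ i \<in> \<int>" using rL by (auto simp: lattice_def)
      moreover have "r * a = \<bar>r * v $ i\<bar>" using r0 by (simp add: a_def abs_mult)
      ultimately have "r * a \<in> \<int>" by simp
      then obtain z where z: "r * a = of_int z" by (auto elim: Ints_cases)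
      have "r * a > 0" using r0 a0 by simp
      hence "z \<ge> 0" using z by simp
      hence kr: "r * a = real (nat z)" using z by simp
      have rk: "r = real (nat z) / a" using kr a0 by (simp add: field_simps)
      have "nat z > 0" using kr r0 a0 by (metis mult_pos_pos of_nat_0_less_iff)
      hence "nat z \<in> K" using rk rL by (simp add: K_def)
      hence "k0 \<le> nat z" by (rule k0(2))
      hence "t0 \<le> r" using rk a0 by (simp add: t0_def divide_right_mono)
      thus False using r by simp
    qed
    hence "w = real q *\<^sub>R u" using r_def t by (simp add: u_def)
    thus "\<exists>k::nat. w = real k *\<^sub>R u" by blast
  qed
qed

lemma fan_cone:
  assumes "is_fan \<Sigma>" "\<sigma> \<in> \<Sigma>"
  shows "convex_cone \<sigma>" "0 \<in> \<sigma>" "convex \<sigma>" "closed \<sigma>" "polyhedron \<sigma>"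
    "\<And>x c. x \<in> \<sigma> \<Longrightarrow> c \<ge> 0 \<Longrightarrow> c *\<^sub>R x \<in> \<sigma>"
    "\<And>x. x \<in> \<sigma> \<Longrightarrow> - x \<in> \<sigma> \<Longrightarrow> x = 0"
proof -
  have "rational_cone \<sigma>" using assms by (simp add: is_fan_def)
  then obtain S where S: "finite S" "S \<subseteq> lattice" "\<sigma> = convex_cone hull S"
    unfolding rational_cone_def by blast
  show cc: "convex_cone \<sigma>" using S(3) convex_cone_convex_cone_hull by simp
  show "0 \<in> \<sigma>" using S(3) convex_cone_hull_contains_0 by simp
  show "convex \<sigma>" using S(3) convex_convex_cone_hull by simp
  show "polyhedron \<sigma>" using S polyhedron_convex_cone_hull by simp
  thus "closed \<sigma>" by (rule polyhedron_imp_closed)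
  show "\<And>x c. x \<in> \<sigma> \<Longrightarrow> c \<ge> 0 \<Longrightarrow> c *\<^sub>R x \<in> \<sigma>"
    using cc by (simp add: convex_cone_iff)
  have sc: "\<sigma> \<inter> uminus ` \<sigma> = {0}" using assms by (auto simp: is_fan_def strongly_convex_def)
  show "\<And>x. x \<in> \<sigma> \<Longrightarrow> - x \<in> \<sigma> \<Longrightarrow> x = 0"
  proof -
    fix x assume "x \<in> \<sigma>" "- x \<in> \<sigma>"
    hence "x \<in> \<sigma> \<inter> uminus ` \<sigma>" by (auto intro: image_eqI[of _ _ "- x"])
    thus "x = 0" using sc by auto
  qed
qed

lemma aff_dim_0_in:
  fixes S :: "(real^'n) set"
  assumes "0 \<in> S" shows "aff_dim S = int (dim S)"
  using aff_dim_eq_dim[of 0 S] assms hull_inc[of 0 S] by simp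

lemma ray_shape:
  assumes "is_fan \<Sigma>" "\<rho> \<in> rays \<Sigma>"
  shows "\<exists>v. v \<in> lattice \<and> v \<noteq> 0 \<and> \<rho> = {t *\<^sub>R v |t. t \<ge> 0}"
proof -
  have \<rho>: "\<rho> \<in> \<Sigma>" "aff_dim \<rho> = 1" using assms(2) by (auto simp: rays_def)
  have "rational_cone \<rho>" using assms \<rho> by (simp add: is_fan_def)
  then obtain S where S: "finite S" "S \<subseteq> lattice" "\<rho> = convex_cone hull S"
    unfolding rational_cone_def by blast
  note fc = fan_cone[OF assms(1) \<rho>(1)]
  have "\<exists>v\<in>S. v \<noteq> 0"
  proof (rule ccontr)
    assume "\<not> ?thesis"
    hence "S \<subseteq> {0}" by auto
    moreover have "convex_cone ({0} :: (real^'n) set)" by (simp add: convex_cone_iff)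
    ultimately have "\<rho> \<subseteq> {0}" using S(3) by (simp add: hull_minimal)
    hence "\<rho> = {0}" using fc(2) by auto
    thus False using \<rho>(2) by simp
  qed
  then obtain v where v: "v \<in> S" "v \<noteq> 0" by blast
  have v\<rho>: "v \<in> \<rho>" unfolding S(3) by (rule hull_inc[OF v(1)])
  have d1: "dim \<rho> = 1" using aff_dim_0_in[OF fc(2)] \<rho>(2) by simp
  have "span {v} = span \<rho>"
    by (rule dim_eq_span) (use v\<rho> d1 v(2) in auto)
  have eq: "\<rho> = {t *\<^sub>R v |t. t \<ge> 0}"
  proof
    show "\<rho> \<subseteq> {t *\<^sub>R v |t. t \<ge> 0}"
    proof
      fix y assume y: "y \<in> \<rho>"
      have "y \<in> span {v}" using span_base[OF y] \<open>span {v} = span \<rho>\<close> by simp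
      then obtain c where c: "y = c *\<^sub>R v" by (auto simp: span_singleton)
      have "c \<ge> 0"
      proof (rule ccontr)
        assume "\<not> c \<ge> 0"
        hence "(1 / (- c)) *\<^sub>R y \<in> \<rho>" using fc(6)[OF y, of "1 / (- c)"] by simp
        moreover have "(1 / (- c)) *\<^sub>R y = - v" using \<open>\<not> c \<ge> 0\<close> c by simp
        ultimately have "v = 0" using fc(7)[OF v\<rho>] by simp
        thus False using v by simp
      qed
      thus "y \<in> {t *\<^sub>R v |t. t \<ge> 0}" using c by auto
    qed
    show "{t *\<^sub>R v |t. t \<ge> 0} \<subseteq> \<rho>" using fc(6)[OF v\<rho>] by auto
  qed
  have "v \<in> lattice" using v(1) S(2) by (rule subsetD[rotated])
  thus ?thesis using v(2) eq by (intro exI[of _ v] conjI)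
qed

lemma prim_gen_props:
  assumes "is_fan \<Sigma>" "\<rho> \<in> rays \<Sigma>"
  shows "prim_gen \<rho> \<in> \<rho>" "prim_gen \<rho> \<in> lattice" "prim_gen \<rho> \<noteq> 0"
        "\<rho> = {t *\<^sub>R prim_gen \<rho> |t. t \<ge> 0}"
proof -
  obtain v where v: "v \<in> lattice" "v \<noteq> 0" "\<rho> = {t *\<^sub>R v |t. t \<ge> 0}"
    using ray_shape[OF assms] by blast
  let ?P = "\<lambda>u. u \<in> \<rho> \<and> u \<in> lattice \<and> u \<noteq> 0 \<and>
                        (\<forall>v\<in>\<rho> \<inter> lattice. \<exists>k::nat. v = real k *\<^sub>R u)"
  obtain u where u: "?P u" using prim_gen_exists[OF v(1,2)] v(3) by blast
  have uniq: "w = u" if w: "?P w" for w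
  proof -
    obtain a :: nat where a: "w = real a *\<^sub>R u" using u w by blast
    obtain b :: nat where b: "u = real b *\<^sub>R w" using u w by blast
    have "u = real b *\<^sub>R w" by (rule b)
    also have "\<dots> = (real b * real a) *\<^sub>R u" by (simp add: a)
    finally have "(real b * real a - 1) *\<^sub>R u = 0" by (simp add: algebra_simps)
    hence "real b * real a = 1" using u by simp
    hence "a = 1" by (metis of_nat_1 of_nat_eq_iff of_nat_mult nat_mult_eq_1_iff)
    thus ?thesis using a by simp
  qed
  have "prim_gen \<rho> = u" unfolding prim_gen_def
    by (rule the_equality[where P="?P", OF u uniq])
  hence P: "?P (prim_gen \<rho>)" using u by simp
  thus "prim_gen \<rho> \<in> \<rho>" "prim_gen \<rho> \<in> lattice" "prim_gen \<rho> \<noteq> 0" by auto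
  obtain c where c: "c \<ge> 0" "prim_gen \<rho> = c *\<^sub>R v" using P v(3) by auto
  have "c \<noteq> 0" using P c by auto
  show "\<rho> = {t *\<^sub>R prim_gen \<rho> |t. t \<ge> 0}"
  proof -
    have eq: "{t *\<^sub>R prim_gen \<rho> |t. t \<ge> 0} = {t *\<^sub>R v |t. t \<ge> 0}"
    proof (intro set_eqI iffI)
      fix x assume "x \<in> {t *\<^sub>R prim_gen \<rho> |t. t \<ge> 0}"
      then obtain t where "t \<ge> 0" "x = (t * c) *\<^sub>R v" using c by auto
      thus "x \<in> {t *\<^sub>R v |t. t \<ge> 0}" using c by auto
    next
      fix x assume "x \<in> {t *\<^sub>R v |t. t \<ge> 0}"
      then obtain t where t: "t \<ge> 0" "x = t *\<^sub>R v" by auto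
      hence "x = (t / c) *\<^sub>R prim_gen \<rho>" using c \<open>c \<noteq> 0\<close> by simp
      moreover have "t / c \<ge> 0" using t c by simp
      ultimately show "x \<in> {t *\<^sub>R prim_gen \<rho> |t. t \<ge> 0}" by blast
    qed
    show ?thesis unfolding eq by (rule v(3))
  qed
qed

lemma exit_point:
  fixes \<sigma> :: "(real^'n) set"
  assumes cl: "closed \<sigma>" and cv: "convex \<sigma>" and z: "0 \<in> \<sigma>"
    and cone: "\<And>x c. x \<in> \<sigma> \<Longrightarrow> c \<ge> 0 \<Longrightarrow> c *\<^sub>R x \<in> \<sigma>"
    and x: "x \<in> \<sigma>" and d: "d \<in> span \<sigma>" "d \<notin> \<sigma>"
  shows "\<exists>t\<ge>0. x + t *\<^sub>R d \<in> \<sigma> - rel_interior \<sigma>"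
proof -
  have d0: "d \<noteq> 0" using d z by auto
  have "\<exists>t0>0. x + t0 *\<^sub>R d \<notin> \<sigma>"
  proof (rule ccontr)
    assume "\<not> ?thesis"
    hence all: "\<And>t. t > 0 \<Longrightarrow> x + t *\<^sub>R d \<in> \<sigma>" by blast
    define f where "f n = inverse (real (Suc n)) *\<^sub>R x + d" for n
    have "f n \<in> \<sigma>" for n
    proof -
      have "inverse (real (Suc n)) *\<^sub>R (x + real (Suc n) *\<^sub>R d) \<in> \<sigma>"
        using cone[OF all[of "real (Suc n)"]] by simp
      thus ?thesis by (simp add: f_def scaleR_add_right)
    qed
    moreover have "f \<longlonglongrightarrow> 0 *\<^sub>R x + d" unfolding f_def
      by (intro tendsto_intros LIMSEQ_inverse_real_of_nat)
    hence "f \<longlonglongrightarrow> d" by simp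
    ultimately have "d \<in> \<sigma>" by (rule closed_sequentially[OF cl])
    thus False using d by simp
  qed
  then obtain t0 where t0: "t0 > 0" "x + t0 *\<^sub>R d \<notin> \<sigma>" by blast
  define I where "I = {0..t0} \<inter> (\<lambda>t. x + t *\<^sub>R d) -` \<sigma>"
  have "closed ((\<lambda>t. x + t *\<^sub>R d) -` \<sigma>)"
    by (rule continuous_closed_vimage[OF cl]) (intro continuous_intros)
  hence cI: "compact I" unfolding I_def by (intro compact_Int_closed) auto
  have "0 \<in> I" using x t0 by (simp add: I_def)
  then obtain T where T: "T \<in> I" "\<And>s. s \<in> I \<Longrightarrow> s \<le> T"
    using compact_attains_sup[OF cI] by blast
  have T1: "0 \<le> T" "T \<le> t0" "x + T *\<^sub>R d \<in> \<sigma>" using T(1) by (auto simp: I_def)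
  have "T \<noteq> t0" using T1 t0 by auto
  hence Tlt: "T < t0" using T1 by simp
  have "x + T *\<^sub>R d \<notin> rel_interior \<sigma>"
  proof
    assume "x + T *\<^sub>R d \<in> rel_interior \<sigma>"
    then obtain e where e: "e > 0" "ball (x + T *\<^sub>R d) e \<inter> affine hull \<sigma> \<subseteq> \<sigma>"
      by (auto simp: mem_rel_interior_ball)
    have ah: "affine hull \<sigma> = span \<sigma>" by (rule affine_hull_span_0) (rule hull_inc[OF z])
    define \<delta> where "\<delta> = min (t0 - T) (e / (2 * norm d))"
    have \<delta>: "\<delta> > 0" "\<delta> \<le> t0 - T" "\<delta> \<le> e / (2 * norm d)"
      using Tlt e d0 by (auto simp: \<delta>_def)
    have "\<delta> * norm d \<le> e / 2" using \<delta>(3) d0 by (simp add: field_simps)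
    hence "dist (x + T *\<^sub>R d) (x + (T + \<delta>) *\<^sub>R d) < e"
      using \<delta>(1) e(1) by (simp add: dist_norm algebra_simps)
    moreover have "x + (T + \<delta>) *\<^sub>R d \<in> span \<sigma>"
      using span_base[OF x] d(1) by (intro span_add span_mul) simp_all
    ultimately have "x + (T + \<delta>) *\<^sub>R d \<in> \<sigma>" using e(2) ah by auto
    hence "T + \<delta> \<in> I" using \<delta> T1 by (simp add: I_def)
    hence "T + \<delta> \<le> T" by (rule T(2))
    thus False using \<delta> by simp
  qed
  thus ?thesis using T1 by blast
qed

lemma span_boundary:
  fixes \<sigma> :: "(real^'n) set"
  assumes cl: "closed \<sigma>" and cv: "convex \<sigma>" and z: "0 \<in> \<sigma>"
    and cone: "\<And>x c. x \<in> \<sigma> \<Longrightarrow> c \<ge> 0 \<Longrightarrow> c *\<^sub>R x \<in> \<sigma>"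
    and pt: "\<And>x. x \<in> \<sigma> \<Longrightarrow> - x \<in> \<sigma> \<Longrightarrow> x = 0"
    and dim: "dim \<sigma> \<ge> 2" and x: "x \<in> \<sigma>"
  shows "x \<in> span (\<sigma> - rel_interior \<sigma>)"
proof (cases "x = 0")
  case True thus ?thesis by (simp add: span_zero)
next
  case False
  have "\<not> span \<sigma> \<subseteq> span {x}"
  proof
    assume "span \<sigma> \<subseteq> span {x}"
    hence "dim \<sigma> \<le> dim {x}" using dim_mono span_superset by (metis subset_trans)
    thus False using dim by (simp split: if_splits)
  qed
  then obtain w where w: "w \<in> span \<sigma>" "w \<notin> span {x}" by blast
  define u where "u = (if w \<in> \<sigma> then - w else w)"
  have u: "u \<in> span \<sigma>" "u \<notin> span {x}" "u \<notin> \<sigma>"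
  proof -
    show "u \<in> span \<sigma>" using w by (simp add: u_def span_neg)
    show "u \<notin> span {x}" using w span_neg[of "-w" "{x}"] by (auto simp: u_def)
    show "u \<notin> \<sigma>"
    proof
      assume "u \<in> \<sigma>"
      show False
      proof (cases "w \<in> \<sigma>")
        case True
        hence "w = 0" using pt \<open>u \<in> \<sigma>\<close> by (simp add: u_def)
        thus False using w by (simp add: span_zero)
      next
        case False thus False using \<open>u \<in> \<sigma>\<close> by (simp add: u_def)
      qed
    qed
  qed
  obtain t1 where t1: "t1 \<ge> 0" "x + t1 *\<^sub>R u \<in> \<sigma> - rel_interior \<sigma>"
    using exit_point[OF cl cv z cone x u(1,3)] by blast
  define p where "p = x + t1 *\<^sub>R u"
  have p\<sigma>: "p \<in> \<sigma>" using t1 by (simp add: p_def)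
  have p0: "p \<noteq> 0"
  proof
    assume "p = 0"
    show False
    proof (cases "t1 = 0")
      case True thus False using \<open>p = 0\<close> False by (simp add: p_def)
    next
      case False
      hence ueq: "u = (- inverse t1) *\<^sub>R x" using \<open>p = 0\<close>
        by (simp add: p_def add_eq_0_iff2 field_simps)
      have "(- inverse t1) *\<^sub>R x \<in> span {x}" by (intro span_mul span_base) simp
      hence "u \<in> span {x}" using ueq by simp
      thus False using u by simp
    qed
  qed
  have mp: "- p \<notin> \<sigma>" using pt p\<sigma> p0 by blast
  have mps: "- p \<in> span \<sigma>" using p\<sigma> by (simp add: span_neg span_base)
  obtain t2 where t2: "t2 \<ge> 0" "x + t2 *\<^sub>R (- p) \<in> \<sigma> - rel_interior \<sigma>"
    using exit_point[OF cl cv z cone x mps mp] by blast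
  have "x = (x + t2 *\<^sub>R (- p)) + t2 *\<^sub>R p" by simp
  also have "\<dots> \<in> span (\<sigma> - rel_interior \<sigma>)"
    using t1 t2 by (intro span_add span_mul span_base) (auto simp: p_def)
  finally show ?thesis .
qed

lemma gen_span_aux:
  assumes fan: "is_fan \<Sigma>"
  shows "\<sigma> \<in> \<Sigma> \<Longrightarrow> nat (aff_dim \<sigma>) = k \<Longrightarrow> \<sigma> \<subseteq> span (\<Union> (cone_rays \<Sigma> \<sigma>))"
proof (induction k arbitrary: \<sigma> rule: less_induct)
  case (less k \<sigma>)
  note fc = fan_cone[OF fan less.prems(1)]
  have ad: "aff_dim \<sigma> = int (dim \<sigma>)" by (rule aff_dim_0_in[OF fc(2)])
  consider "dim \<sigma> = 0" | "dim \<sigma> = 1" | "dim \<sigma> \<ge> 2" by linarith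
  thus ?case
  proof cases
    case 1
    hence "aff_dim \<sigma> = 0" using ad by simp
    then obtain a where "\<sigma> = {a}" by (auto simp: aff_dim_eq_0)
    hence "\<sigma> = {0}" using fc(2) by simp
    thus ?thesis by (simp add: span_zero)
  next
    case 2
    hence "\<sigma> \<in> rays \<Sigma>" using ad less.prems by (simp add: rays_def)
    hence "\<sigma> \<in> cone_rays \<Sigma> \<sigma>" by (simp add: cone_rays_def)
    hence "\<sigma> \<subseteq> \<Union> (cone_rays \<Sigma> \<sigma>)" by blast
    thus ?thesis using span_superset by blast
  next
    case 3
    have fac: "F \<subseteq> span (\<Union> (cone_rays \<Sigma> \<sigma>))" if F: "F facet_of \<sigma>" for F
    proof -
      have F\<Sigma>: "F \<in> \<Sigma>" using fan less.prems(1) F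
        by (auto simp: is_fan_def facet_of_def)
      have "aff_dim F = aff_dim \<sigma> - 1" using F by (simp add: facet_of_def)
      moreover have "aff_dim F \<ge> 0" using F aff_dim_geq[of F] aff_dim_empty[of F]
        unfolding facet_of_def by linarith
      ultimately have "nat (aff_dim F) < k" using less.prems(2) ad 3 by linarith
      hence "F \<subseteq> span (\<Union> (cone_rays \<Sigma> F))" using less.IH F\<Sigma> by blast
      moreover have "cone_rays \<Sigma> F \<subseteq> cone_rays \<Sigma> \<sigma>"
        using facet_of_imp_subset[OF F] by (auto simp: cone_rays_def)
      hence "span (\<Union> (cone_rays \<Sigma> F)) \<subseteq> span (\<Union> (cone_rays \<Sigma> \<sigma>))"
        by (intro span_mono) blast
      ultimately show ?thesis by blast
    qed
    have "\<sigma> - rel_interior \<sigma> \<subseteq> span (\<Union> (cone_rays \<Sigma> \<sigma>))"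
      using rel_boundary_of_polyhedron[OF fc(5)] fac by blast
    hence sb: "span (\<sigma> - rel_interior \<sigma>) \<subseteq> span (\<Union> (cone_rays \<Sigma> \<sigma>))"
      by (metis span_mono span_span)
    show ?thesis
    proof
      fix x assume "x \<in> \<sigma>"
      have "x \<in> span (\<sigma> - rel_interior \<sigma>)"
        apply (rule span_boundary)
        using fc 3 \<open>x \<in> \<sigma>\<close> by auto
      thus "x \<in> span (\<Union> (cone_rays \<Sigma> \<sigma>))" using sb by blast
    qed
  qed
qed

lemma gen_span:
  assumes fan: "is_fan \<Sigma>" and "\<sigma> \<in> \<Sigma>"
  shows "\<sigma> \<subseteq> span (prim_gen ` cone_rays \<Sigma> \<sigma>)"
proof -
  have "\<Union> (cone_rays \<Sigma> \<sigma>) \<subseteq> span (prim_gen ` cone_rays \<Sigma> \<sigma>)"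
  proof
    fix y assume "y \<in> \<Union> (cone_rays \<Sigma> \<sigma>)"
    then obtain \<rho> where \<rho>: "\<rho> \<in> cone_rays \<Sigma> \<sigma>" "y \<in> \<rho>" by blast
    hence r: "\<rho> \<in> rays \<Sigma>" by (simp add: cone_rays_def)
    obtain t where "y = t *\<^sub>R prim_gen \<rho>"
      using \<rho>(2) prim_gen_props(4)[OF fan r] by blast
    moreover have "prim_gen \<rho> \<in> span (prim_gen ` cone_rays \<Sigma> \<sigma>)"
      using \<rho>(1) by (intro span_base imageI)
    ultimately show "y \<in> span (prim_gen ` cone_rays \<Sigma> \<sigma>)" by (simp add: span_mul)
  qed
  hence "span (\<Union> (cone_rays \<Sigma> \<sigma>)) \<subseteq> span (prim_gen ` cone_rays \<Sigma> \<sigma>)"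
    by (metis span_mono span_span)
  thus ?thesis using gen_span_aux[OF fan assms(2) refl] by blast
qed

lemma common_den:
  fixes A :: "rat set"
  assumes "finite A"
  shows "\<exists>D::int. D > 0 \<and> (\<forall>q\<in>A. of_int D * q \<in> \<int>)"
  using assms
proof (induction A rule: finite_induct)
  case empty thus ?case by (intro exI[of _ 1]) simp
next
  case (insert q A)
  then obtain D where D: "D > 0" "\<forall>p\<in>A. of_int D * p \<in> \<int>" by blast
  obtain n d where nd: "quotient_of q = (n, d)" by (cases "quotient_of q")
  have d: "d > 0" using quotient_of_denom_pos[OF nd] .
  have qd: "q = of_int n / of_int d" using quotient_of_div[OF nd] .
  show ?case
  proof (intro exI[of _ "D * d"] conjI ballI)
    show "D * d > 0" using D d by simp
    fix p assume "p \<in> insert q A"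
    then consider "p = q" | "p \<in> A" by blast
    thus "of_int (D * d) * p \<in> \<int>"
    proof cases
      case 1
      have "of_int d * q = (of_int n :: rat)" using qd d by simp
      have e: "of_int (D * d) * p = of_int D * (of_int d * q :: rat)"
        using 1 by (simp only: of_int_mult mult.assoc)
      show ?thesis unfolding e \<open>of_int d * q = (of_int n :: rat)\<close> by simp
    next
      case 2
      have "of_int (D * d) * p = of_int d * (of_int D * p)" by simp
      thus ?thesis using D(2) 2 by (metis Ints_mult Ints_of_int)
    qed
  qed
qed

definition rv :: "rat^'n \<Rightarrow> real^'n" where "rv q = (\<chi> i. of_rat (q $ i))"
definition qv :: "real^'n \<Rightarrow> rat^'n" where "qv x = (\<chi> i. of_int \<lfloor>x $ i\<rfloor>)"

lemma rv_qv: "x \<in> lattice \<Longrightarrow> rv (qv x) = x"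
  by (auto simp: rv_def qv_def lattice_def vec_eq_iff elim!: Ints_cases)

lemma rv_add: "rv (a + b) = rv a + rv b" by (simp add: rv_def vec_eq_iff of_rat_add)
lemma rv_scale: "rv (c *s a) = of_rat c *\<^sub>R rv a" by (simp add: rv_def vec_eq_iff of_rat_mult)
lemma rv_zero: "rv 0 = 0" by (simp add: rv_def vec_eq_iff)
lemma rv_sum: "rv (sum f S) = (\<Sum>x\<in>S. rv (f x))"
  by (induction S rule: infinite_finite_induct) (auto simp: rv_zero rv_add)
lemma rv_inj: "rv a = rv b \<Longrightarrow> a = b" by (simp add: rv_def vec_eq_iff)

lemma lin_ext_rat:
  fixes xq yq :: "'r \<Rightarrow> rat^'n"
  assumes fin: "finite R"
    and rel: "\<And>c. (\<Sum>\<rho>\<in>R. c \<rho> *s xq \<rho>) = 0 \<Longrightarrow> (\<Sum>\<rho>\<in>R. c \<rho> *s yq \<rho>) = 0"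
  shows "\<exists>g. Vector_Spaces.linear (*s) (*s) g \<and> (\<forall>\<rho>\<in>R. g (xq \<rho>) = yq \<rho>)"
proof -
  obtain B where B: "B \<subseteq> xq ` R" "vec.independent B" "xq ` R \<subseteq> vec.span B"
    by (rule vec.maximal_independent_subset)
  have finB: "finite B" using B(1) fin finite_subset by blast
  define r where "r b = inv_into R xq b" for b
  have r: "r b \<in> R" "xq (r b) = b" if "b \<in> B" for b
    using that B(1) by (auto simp: r_def inv_into_into f_inv_into_f)
  have injr: "inj_on r B" by (metis inj_onI r(2))
  obtain g where g: "Vector_Spaces.linear (*s) (*s) g" "\<forall>b\<in>B. g b = yq (r b)"
    using vec.linear_independent_extend[OF B(2), of "\<lambda>b. yq (r b)"] by blast
  have "g (xq \<rho>) = yq \<rho>" if \<rho>: "\<rho> \<in> R" for \<rho>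
  proof -
    have "xq \<rho> \<in> vec.span B" using B(3) \<rho> by blast
    then obtain u where u: "xq \<rho> = (\<Sum>b\<in>B. u b *s b)" using vec.span_finite[OF finB] by auto
    define h where "h \<rho>' = (if \<rho>' \<in> r ` B then u (xq \<rho>') else 0)" for \<rho>'
    define c where "c \<rho>' = (if \<rho>' = \<rho> then 1 else 0) - h \<rho>'" for \<rho>'
    have key: "(\<Sum>\<rho>'\<in>R. c \<rho>' *s z \<rho>') = z \<rho> - (\<Sum>b\<in>B. u b *s z (r b))" for z :: "'r \<Rightarrow> rat^'n"
    proof -
      have "(\<Sum>\<rho>'\<in>R. c \<rho>' *s z \<rho>') = (\<Sum>\<rho>'\<in>R. (if \<rho>' = \<rho> then 1 else 0) *s z \<rho>') - (\<Sum>\<rho>'\<in>R. h \<rho>' *s z \<rho>')"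
        by (simp add: c_def vec.scale_left_diff_distrib sum_subtractf)
      also have "(\<Sum>\<rho>'\<in>R. (if \<rho>' = \<rho> then 1 else 0) *s z \<rho>') = z \<rho>"
      proof -
        have "(\<Sum>\<rho>'\<in>R. (if \<rho>' = \<rho> then 1 else 0) *s z \<rho>') = (\<Sum>\<rho>'\<in>R. if \<rho>' = \<rho> then z \<rho>' else 0)"
          by (intro sum.cong) auto
        thus ?thesis using \<rho> fin by (simp add: sum.delta)
      qed
      also have "(\<Sum>\<rho>'\<in>R. h \<rho>' *s z \<rho>') = (\<Sum>\<rho>'\<in>r ` B. u (xq \<rho>') *s z \<rho>')"
      proof -
        have "r ` B \<subseteq> R" using r by auto
        hence "(\<Sum>\<rho>'\<in>R. h \<rho>' *s z \<rho>') = (\<Sum>\<rho>'\<in>r ` B. h \<rho>' *s z \<rho>')"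
          by (intro sum.mono_neutral_right fin) (auto simp: h_def)
        also have "\<dots> = (\<Sum>\<rho>'\<in>r ` B. u (xq \<rho>') *s z \<rho>')"
          by (intro sum.cong) (auto simp: h_def)
        finally show ?thesis .
      qed
      also have "\<dots> = (\<Sum>b\<in>B. u b *s z (r b))"
        by (subst sum.reindex[OF injr]) (auto simp: r(2) intro!: sum.cong)
      finally show ?thesis .
    qed
    have "(\<Sum>\<rho>'\<in>R. c \<rho>' *s xq \<rho>') = 0"
      unfolding key using u by (simp add: r(2) cong: sum.cong)
    hence "(\<Sum>\<rho>'\<in>R. c \<rho>' *s yq \<rho>') = 0" by (rule rel)
    hence "yq \<rho> = (\<Sum>b\<in>B. u b *s yq (r b))" unfolding key by simp
    also have "\<dots> = (\<Sum>b\<in>B. u b *s g b)" using g(2) by simp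
    also have "\<dots> = g (\<Sum>b\<in>B. u b *s b)"
      by (simp add: vec.linear_sum[OF g(1)] vec.linear_scale[OF g(1)])
    finally show ?thesis using u by simp
  qed
  thus ?thesis using g(1) by blast
qed

lemma lin_transfer:
  fixes x y :: "'r \<Rightarrow> real^'n"
  assumes fin: "finite R" and Lx: "\<And>\<rho>. \<rho> \<in> R \<Longrightarrow> x \<rho> \<in> lattice"
    and Ly: "\<And>\<rho>. \<rho> \<in> R \<Longrightarrow> y \<rho> \<in> lattice"
    and rel: "\<And>a::'r\<Rightarrow>int. (\<Sum>\<rho>\<in>R. of_int (a \<rho>) *\<^sub>R x \<rho>) = 0 \<Longrightarrow> (\<Sum>\<rho>\<in>R. of_int (a \<rho>) *\<^sub>R y \<rho>) = 0"
  shows "\<exists>(M::real^'n^'n) (k::nat). k > 0 \<and> (\<forall>i j. M$i$j \<in> \<int>) \<and> (\<forall>\<rho>\<in>R. M *v x \<rho> = real k *\<^sub>R y \<rho>)"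
proof -
  define xq where "xq \<rho> = qv (x \<rho>)" for \<rho>
  define yq where "yq \<rho> = qv (y \<rho>)" for \<rho>
  have rx: "rv (xq \<rho>) = x \<rho>" if "\<rho> \<in> R" for \<rho> using Lx[OF that] by (simp add: xq_def rv_qv)
  have ry: "rv (yq \<rho>) = y \<rho>" if "\<rho> \<in> R" for \<rho> using Ly[OF that] by (simp add: yq_def rv_qv)
  have relQ: "(\<Sum>\<rho>\<in>R. c \<rho> *s yq \<rho>) = 0" if c: "(\<Sum>\<rho>\<in>R. c \<rho> *s xq \<rho>) = 0" for c
  proof -
    obtain D :: int where D: "D > 0" "\<forall>q\<in>c ` R. of_int D * q \<in> \<int>"
      using common_den[of "c ` R"] fin by blast
    define a where "a \<rho> = \<lfloor>of_int D * c \<rho>\<rfloor>" for \<rho>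
    have a: "of_int (a \<rho>) = of_int D * c \<rho>" if "\<rho> \<in> R" for \<rho>
      using D(2) that by (auto simp: a_def elim!: Ints_cases)
    have conv: "(\<Sum>\<rho>\<in>R. of_int (a \<rho>) *\<^sub>R z \<rho>) = rv (of_int D *s (\<Sum>\<rho>\<in>R. c \<rho> *s zq \<rho>))"
      if z: "\<And>\<rho>. \<rho> \<in> R \<Longrightarrow> rv (zq \<rho>) = z \<rho>" for z zq
    proof -
      have "rv (of_int D *s (\<Sum>\<rho>\<in>R. c \<rho> *s zq \<rho>)) = rv (\<Sum>\<rho>\<in>R. (of_int D * c \<rho>) *s zq \<rho>)"
        by (simp add: vec.scale_sum_right vector_smult_assoc)
      also have "\<dots> = (\<Sum>\<rho>\<in>R. of_rat (of_int D * c \<rho>) *\<^sub>R rv (zq \<rho>))"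
        by (simp add: rv_sum rv_scale)
      also have "\<dots> = (\<Sum>\<rho>\<in>R. of_int (a \<rho>) *\<^sub>R z \<rho>)"
        by (intro sum.cong refl) (simp add: z a[symmetric] of_rat_of_int_eq)
      finally show ?thesis by simp
    qed
    have "(\<Sum>\<rho>\<in>R. of_int (a \<rho>) *\<^sub>R x \<rho>) = 0" using conv[of xq x] rx c by (simp add: rv_zero)
    hence "(\<Sum>\<rho>\<in>R. of_int (a \<rho>) *\<^sub>R y \<rho>) = 0" by (rule rel)
    hence "rv (of_int D *s (\<Sum>\<rho>\<in>R. c \<rho> *s yq \<rho>)) = rv 0" using conv[of yq y] ry by (simp add: rv_zero)
    hence "of_int D *s (\<Sum>\<rho>\<in>R. c \<rho> *s yq \<rho>) = 0" by (rule rv_inj)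
    thus ?thesis using D(1) by (simp add: vec.scale_eq_0_iff)
  qed
  obtain g where g: "Vector_Spaces.linear (*s) (*s) g" "\<forall>\<rho>\<in>R. g (xq \<rho>) = yq \<rho>"
    using lin_ext_rat[OF fin, of xq yq] relQ by blast
  define G where "G = matrix g"
  have G: "G *v v = g v" for v unfolding G_def by (rule matrix_works[OF g(1)])
  have finG: "finite ((\<lambda>(i,j). G$i$j) ` UNIV)" by simp
  obtain D :: int where D: "D > 0" "\<forall>q\<in>(\<lambda>(i,j). G$i$j) ` UNIV. of_int D * q \<in> \<int>"
    using common_den[OF finG] by blast
  have DG: "of_int D * G$i$j \<in> \<int>" for i j using D(2) by force
  define M :: "real^'n^'n" where "M = (\<chi> i j. of_rat (of_int D * G$i$j))"
  show ?thesis
  proof (intro exI[of _ M] exI[of _ "nat D"] conjI allI ballI)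
    show "nat D > 0" using D by simp
    fix i j
    show "M$i$j \<in> \<int>" using DG[of i j] by (auto simp: M_def of_rat_of_int_eq elim!: Ints_cases)
  next
    fix \<rho> assume \<rho>: "\<rho> \<in> R"
    have "(M *v x \<rho>)$i = real (nat D) * y \<rho> $ i" for i
    proof -
      have "(M *v x \<rho>)$i = (\<Sum>j\<in>UNIV. of_rat (of_int D * G$i$j) * of_rat (xq \<rho> $ j))"
        using rx[OF \<rho>] by (simp add: matrix_vector_mult_def M_def rv_def vec_eq_iff)
      also have "\<dots> = of_rat (of_int D * (G *v xq \<rho>)$i)"
        by (simp add: matrix_vector_mult_def of_rat_sum of_rat_mult sum_distrib_left mult.assoc)
      also have "\<dots> = of_rat (of_int D * yq \<rho> $ i)" using G g(2) \<rho> by simp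
      also have "\<dots> = real (nat D) * y \<rho> $ i"
        using ry[OF \<rho>] D(1) by (simp add: rv_def vec_eq_iff of_rat_mult of_rat_of_int_eq)
      finally show ?thesis .
    qed
    thus "M *v x \<rho> = real (nat D) *\<^sub>R y \<rho>" by (simp add: vec_eq_iff)
  qed
qed

definition good :: "(real^'n) set set \<Rightarrow> (real^'n) set set \<Rightarrow> bool" where
  "good \<Sigma> C \<longleftrightarrow> (\<exists>\<sigma>\<in>\<Sigma>. C \<subseteq> cone_rays \<Sigma> \<sigma>)"

lemma finite_rays: "is_fan \<Sigma> \<Longrightarrow> finite (rays \<Sigma>)"
  by (auto simp: is_fan_def rays_def)

lemma good_iff:
  assumes fan: "is_fan \<Sigma>" and C: "C \<subseteq> rays \<Sigma>"
  shows "good \<Sigma> C \<longleftrightarrow> (\<forall>P. P \<subseteq> C \<longrightarrow> \<not> primitive_collection \<Sigma> P)"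
proof
  assume "good \<Sigma> C"
  then obtain \<sigma> where "\<sigma> \<in> \<Sigma>" "C \<subseteq> cone_rays \<Sigma> \<sigma>" by (auto simp: good_def)
  thus "\<forall>P. P \<subseteq> C \<longrightarrow> \<not> primitive_collection \<Sigma> P"
    by (auto simp: primitive_collection_def)
next
  assume H: "\<forall>P. P \<subseteq> C \<longrightarrow> \<not> primitive_collection \<Sigma> P"
  show "good \<Sigma> C"
  proof (rule ccontr)
    assume nC: "\<not> good \<Sigma> C"
    have finC: "finite C" using finite_subset[OF C finite_rays[OF fan]] .
    let ?N = "\<lambda>P. P \<subseteq> C \<and> \<not> good \<Sigma> P"
    obtain P where P: "?N P" "\<And>Q. ?N Q \<Longrightarrow> card P \<le> card Q"
      using ex_has_least_nat[of ?N C card] nC by blast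
    have "primitive_collection \<Sigma> P"
      unfolding primitive_collection_def
    proof (intro conjI allI impI)
      show "P \<subseteq> rays \<Sigma>" using P C by blast
      show "\<forall>\<sigma>\<in>\<Sigma>. \<not> P \<subseteq> cone_rays \<Sigma> \<sigma>" using P by (auto simp: good_def)
      fix C' assume "C' \<subset> P"
      hence "card C' < card P" using finite_subset[OF _ finC] P by (meson psubset_card_mono)
      hence "\<not> ?N C'" using P(2) by (meson not_le)
      thus "\<exists>\<sigma>\<in>\<Sigma>. C' \<subseteq> cone_rays \<Sigma> \<sigma>" using \<open>C' \<subset> P\<close> P by (auto simp: good_def)
    qed
    thus False using H P by blast
  qed
qed

lemma ae_parts:
  fixes \<Sigma>1 \<Sigma>2 :: "(real^'n) set set"
  assumes "amply_equivalent \<Sigma>1 \<Sigma>2 \<Psi>"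
  shows "is_fan \<Sigma>1" "is_fan \<Sigma>2" "complete_fan \<Sigma>1" "complete_fan \<Sigma>2"
    "bij_betw \<Psi> (rays \<Sigma>1) (rays \<Sigma>2)"
    "\<And>C. C \<subseteq> rays \<Sigma>1 \<Longrightarrow> primitive_collection \<Sigma>1 C \<longleftrightarrow> primitive_collection \<Sigma>2 (\<Psi> ` C)"
    "\<And>a :: (real^'n) set \<Rightarrow> int.
        (\<Sum>\<rho>\<in>rays \<Sigma>1. of_int (a \<rho>) *\<^sub>R prim_gen \<rho>) = 0 \<longleftrightarrow>
        (\<Sum>\<rho>\<in>rays \<Sigma>1. of_int (a \<rho>) *\<^sub>R prim_gen (\<Psi> \<rho>)) = 0"
  using assms by (auto simp: amply_equivalent_def complete_fan_def)

lemma good_transfer: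
  assumes ae: "amply_equivalent \<Sigma>1 \<Sigma>2 \<Psi>" and C: "C \<subseteq> rays \<Sigma>1" and g: "good \<Sigma>1 C"
  shows "good \<Sigma>2 (\<Psi> ` C)"
proof -
  note p = ae_parts[OF ae]
  have C2: "\<Psi> ` C \<subseteq> rays \<Sigma>2" using C p(5) by (auto simp: bij_betw_def)
  have H: "\<forall>P. P \<subseteq> C \<longrightarrow> \<not> primitive_collection \<Sigma>1 P" using good_iff[OF p(1) C] g by blast
  have "\<forall>P'. P' \<subseteq> \<Psi> ` C \<longrightarrow> \<not> primitive_collection \<Sigma>2 P'"
  proof (intro allI impI)
    fix P' assume "P' \<subseteq> \<Psi> ` C"
    then obtain P where P: "P \<subseteq> C" "P' = \<Psi> ` P" by (auto simp: subset_image_iff)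
    thus "\<not> primitive_collection \<Sigma>2 P'" using H p(6)[of P] C by auto
  qed
  thus ?thesis using good_iff[OF p(2) C2] by blast
qed

lemma ae_sym:
  fixes \<Sigma>1 \<Sigma>2 :: "(real^'n) set set"
  assumes ae: "amply_equivalent \<Sigma>1 \<Sigma>2 \<Psi>"
  shows "amply_equivalent \<Sigma>2 \<Sigma>1 (inv_into (rays \<Sigma>1) \<Psi>)"
proof -
  note p = ae_parts[OF ae]
  let ?\<Phi> = "inv_into (rays \<Sigma>1) \<Psi>"
  have bij2: "bij_betw ?\<Phi> (rays \<Sigma>2) (rays \<Sigma>1)" by (rule bij_betw_inv_into[OF p(5)])
  have PhiPsi: "?\<Phi> (\<Psi> \<rho>) = \<rho>" if "\<rho> \<in> rays \<Sigma>1" for \<rho>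
    using p(5) that by (simp add: bij_betw_def inv_into_f_f)
  have PsiPhi: "\<Psi> (?\<Phi> \<rho>') = \<rho>'" if "\<rho>' \<in> rays \<Sigma>2" for \<rho>'
    using p(5) that by (simp add: bij_betw_def f_inv_into_f)
  have prim: "primitive_collection \<Sigma>2 C \<longleftrightarrow> primitive_collection \<Sigma>1 (?\<Phi> ` C)"
    if C: "C \<subseteq> rays \<Sigma>2" for C
  proof -
    have C1: "?\<Phi> ` C \<subseteq> rays \<Sigma>1" using C bij2 by (auto simp: bij_betw_def)
    have "\<Psi> ` (?\<Phi> ` C) = C" using C PsiPhi by (force simp: image_image)
    thus ?thesis using p(6)[OF C1] by simp
  qed
  have rel: "(\<Sum>\<rho>\<in>rays \<Sigma>2. of_int (a \<rho>) *\<^sub>R prim_gen \<rho>) = 0 \<longleftrightarrow>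
        (\<Sum>\<rho>\<in>rays \<Sigma>2. of_int (a \<rho>) *\<^sub>R prim_gen (?\<Phi> \<rho>)) = 0" for a :: "(real^'n) set \<Rightarrow> int"
  proof -
    have e1: "(\<Sum>\<rho>\<in>rays \<Sigma>2. of_int (a \<rho>) *\<^sub>R prim_gen \<rho>) =
              (\<Sum>\<rho>\<in>rays \<Sigma>1. of_int (a (\<Psi> \<rho>)) *\<^sub>R prim_gen (\<Psi> \<rho>))"
      using sum.reindex_bij_betw[OF p(5), of "\<lambda>\<rho>. of_int (a \<rho>) *\<^sub>R prim_gen \<rho>"] by simp
    have e2: "(\<Sum>\<rho>\<in>rays \<Sigma>2. of_int (a \<rho>) *\<^sub>R prim_gen (?\<Phi> \<rho>)) =
              (\<Sum>\<rho>\<in>rays \<Sigma>1. of_int (a (\<Psi> \<rho>)) *\<^sub>R prim_gen \<rho>)"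
      using sum.reindex_bij_betw[OF p(5), of "\<lambda>\<rho>. of_int (a \<rho>) *\<^sub>R prim_gen (?\<Phi> \<rho>)"]
      by (simp add: PhiPsi cong: sum.cong)
    show ?thesis unfolding e1 e2 using p(7)[of "\<lambda>\<rho>. a (\<Psi> \<rho>)"] by simp
  qed
  show ?thesis unfolding amply_equivalent_def
    using p(3,4) bij2 prim rel by blast
qed

lemma ae_matrix:
  fixes \<Sigma>1 \<Sigma>2 :: "(real^'n) set set"
  assumes ae: "amply_equivalent \<Sigma>1 \<Sigma>2 \<Psi>"
  shows "\<exists>(M::real^'n^'n) (k::nat). k > 0 \<and> (\<forall>i j. M$i$j \<in> \<int>) \<and>
           (\<forall>\<rho>\<in>rays \<Sigma>1. M *v prim_gen \<rho> = real k *\<^sub>R prim_gen (\<Psi> \<rho>))"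
proof -
  note p = ae_parts[OF ae]
  show ?thesis
  proof (rule lin_transfer[OF finite_rays[OF p(1)]])
    show "prim_gen \<rho> \<in> lattice" if "\<rho> \<in> rays \<Sigma>1" for \<rho> using prim_gen_props(2)[OF p(1) that] .
    show "prim_gen (\<Psi> \<rho>) \<in> lattice" if "\<rho> \<in> rays \<Sigma>1" for \<rho>
      using prim_gen_props(2)[OF p(2)] that p(5) by (auto simp: bij_betw_def)
    show "(\<Sum>\<rho>\<in>rays \<Sigma>1. of_int (a \<rho>) *\<^sub>R prim_gen (\<Psi> \<rho>)) = 0"
      if "(\<Sum>\<rho>\<in>rays \<Sigma>1. of_int (a \<rho>) *\<^sub>R prim_gen \<rho>) = 0" for a
      using p(7)[of a] that by simp
  qed
qed

lemma span_all:
  fixes \<Sigma> :: "(real^'n) set set"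
  assumes "complete_fan \<Sigma>"
  shows "span (prim_gen ` rays \<Sigma>) = UNIV"
proof -
  have fan: "is_fan \<Sigma>" using assms by (simp add: complete_fan_def)
  have "x \<in> span (prim_gen ` rays \<Sigma>)" for x
  proof -
    have "x \<in> \<Union>\<Sigma>" using assms by (simp add: complete_fan_def)
    then obtain \<sigma> where "\<sigma> \<in> \<Sigma>" "x \<in> \<sigma>" by blast
    hence "x \<in> span (prim_gen ` cone_rays \<Sigma> \<sigma>)" using gen_span[OF fan] by blast
    moreover have "span (prim_gen ` cone_rays \<Sigma> \<sigma>) \<subseteq> span (prim_gen ` rays \<Sigma>)"
      by (intro span_mono image_mono) (auto simp: cone_rays_def)
    ultimately show ?thesis by blast
  qed
  thus ?thesis by blast
qed

lemma inner_transpose: "inner (transpose M *v m) v = inner m (M *v (v::real^'n))"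
  by (simp add: dot_lmul_matrix)

lemma lin_on_span_eq:
  fixes f g :: "real^'n \<Rightarrow> real^'n"
  assumes "linear f" "linear g" "span B = UNIV" "\<And>b. b \<in> B \<Longrightarrow> f b = g b"
  shows "f x = g x"
  using linear_eq_on_span[OF assms(1,2), of B x] assms(3,4) by auto

lemma ae_matrices:
  fixes \<Sigma>1 \<Sigma>2 :: "(real^'n) set set"
  assumes ae: "amply_equivalent \<Sigma>1 \<Sigma>2 \<Psi>"
  obtains M :: "real^'n^'n" and k :: nat and M' :: "real^'n^'n" and k' :: nat
  where "k > 0" "\<forall>i j. M$i$j \<in> \<int>" "\<forall>\<rho>\<in>rays \<Sigma>1. M *v prim_gen \<rho> = real k *\<^sub>R prim_gen (\<Psi> \<rho>)"
    "k' > 0" "\<And>v. M *v (M' *v v) = (real k * real k') *\<^sub>R v"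
proof -
  note p = ae_parts[OF ae]
  let ?\<Phi> = "inv_into (rays \<Sigma>1) \<Psi>"
  obtain M k where Mk: "k > 0" "\<forall>i j. M$i$j \<in> \<int>"
    "\<forall>\<rho>\<in>rays \<Sigma>1. M *v prim_gen \<rho> = real k *\<^sub>R prim_gen (\<Psi> \<rho>)"
    using ae_matrix[OF ae] by blast
  obtain M' k' where Mk': "k' > 0" "\<forall>i j. M'$i$j \<in> \<int>"
    "\<forall>\<rho>\<in>rays \<Sigma>2. M' *v prim_gen \<rho> = real k' *\<^sub>R prim_gen (?\<Phi> \<rho>)"
    using ae_matrix[OF ae_sym[OF ae]] by blast
  have PsiPhi: "\<Psi> (?\<Phi> \<rho>') = \<rho>'" if "\<rho>' \<in> rays \<Sigma>2" for \<rho>'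
    using p(5) that by (simp add: bij_betw_def f_inv_into_f)
  have Phi1: "?\<Phi> \<rho>' \<in> rays \<Sigma>1" if "\<rho>' \<in> rays \<Sigma>2" for \<rho>'
    using bij_betw_inv_into[OF p(5)] that by (auto simp: bij_betw_def)
  have "M *v (M' *v v) = (real k * real k') *\<^sub>R v" for v
  proof (rule lin_on_span_eq[where f="\<lambda>v. M *v (M' *v v)" and g="\<lambda>v. (real k * real k') *\<^sub>R v", OF _ _ span_all[OF p(4)]])
    show "linear (\<lambda>v. M *v (M' *v v))" by (simp add: matrix_vector_mul_assoc)
    show "linear (\<lambda>v. (real k * real k') *\<^sub>R (v::real^'n))" by (rule linear_scaleR)
    fix b assume "b \<in> prim_gen ` rays \<Sigma>2"
    then obtain \<rho>' where \<rho>': "\<rho>' \<in> rays \<Sigma>2" "b = prim_gen \<rho>'" by blast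
    have "M *v (M' *v b) = M *v (real k' *\<^sub>R prim_gen (?\<Phi> \<rho>'))" using Mk'(3) \<rho>' by simp
    also have "\<dots> = real k' *\<^sub>R (M *v prim_gen (?\<Phi> \<rho>'))" by (simp add: matrix_vector_mult_scaleR)
    also have "\<dots> = (real k * real k') *\<^sub>R b" using Mk(3) Phi1[OF \<rho>'(1)] PsiPhi[OF \<rho>'(1)] \<rho>' by simp
    finally show "M *v (M' *v b) = (real k * real k') *\<^sub>R b" .
  qed
  thus ?thesis using that Mk Mk'(1) by blast
qed

lemma full_dim_span:
  fixes \<Sigma> :: "(real^'n) set set"
  assumes fan: "is_fan \<Sigma>" and \<sigma>: "\<sigma> \<in> \<Sigma>" "aff_dim \<sigma> = int CARD('n)"
  shows "span (prim_gen ` cone_rays \<Sigma> \<sigma>) = UNIV"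
proof -
  have "dim \<sigma> = CARD('n)" using aff_dim_0_in[OF fan_cone(2)[OF fan \<sigma>(1)]] \<sigma>(2) by simp
  moreover have "dim \<sigma> \<le> dim (prim_gen ` cone_rays \<Sigma> \<sigma>)" by (rule dim_mono[OF gen_span[OF fan \<sigma>(1)]])
  ultimately have "dim (prim_gen ` cone_rays \<Sigma> \<sigma>) = CARD('n)"
    using dim_subset_UNIV_cart[of "prim_gen ` cone_rays \<Sigma> \<sigma>"] by simp
  thus ?thesis using dim_eq_full by (metis DIM_cart DIM_real mult_1_right)
qed

lemma pg_in_cone:
  assumes fan: "is_fan \<Sigma>" and "\<rho> \<in> cone_rays \<Sigma> \<sigma>"
  shows "prim_gen \<rho> \<in> \<sigma>"
  using assms prim_gen_props(1)[OF fan] by (auto simp: cone_rays_def)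

lemma full_dim_unique:
  fixes \<Sigma> :: "(real^'n) set set"
  assumes fan: "is_fan \<Sigma>" and \<sigma>: "\<sigma> \<in> \<Sigma>" "aff_dim \<sigma> = int CARD('n)"
    and \<tau>: "\<tau> \<in> \<Sigma>" and sub: "cone_rays \<Sigma> \<sigma> \<subseteq> cone_rays \<Sigma> \<tau>"
  shows "\<sigma> = \<tau>"
proof -
  have sp: "span (prim_gen ` cone_rays \<Sigma> \<sigma>) = UNIV" by (rule full_dim_span[OF fan \<sigma>])
  have "prim_gen ` cone_rays \<Sigma> \<sigma> \<subseteq> \<sigma> \<inter> \<tau>"
    using sub pg_in_cone[OF fan] by blast
  hence "span (\<sigma> \<inter> \<tau>) = UNIV" using sp span_mono by (metis top.extremum_uniqueI)
  hence "dim (\<sigma> \<inter> \<tau>) = CARD('n)" using dim_eq_full by (metis DIM_cart DIM_real mult_1_right)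
  moreover have "0 \<in> \<sigma> \<inter> \<tau>" using fan_cone(2)[OF fan] \<sigma>(1) \<tau> by blast
  ultimately have ad: "aff_dim (\<sigma> \<inter> \<tau>) = int CARD('n)" using aff_dim_0_in by metis
  have f1: "(\<sigma> \<inter> \<tau>) face_of \<sigma>" "(\<sigma> \<inter> \<tau>) face_of \<tau>"
    using fan \<sigma>(1) \<tau> by (auto simp: is_fan_def)
  have "\<sigma> \<inter> \<tau> = \<sigma>"
  proof (rule ccontr)
    assume "\<sigma> \<inter> \<tau> \<noteq> \<sigma>"
    hence "aff_dim (\<sigma> \<inter> \<tau>) < aff_dim \<sigma>"
      by (rule face_of_aff_dim_lt[OF fan_cone(3)[OF fan \<sigma>(1)] f1(1)])
    thus False using ad \<sigma>(2) by simp
  qed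
  hence f2: "\<sigma> face_of \<tau>" using f1(2) by simp
  show "\<sigma> = \<tau>"
  proof (rule ccontr)
    assume "\<sigma> \<noteq> \<tau>"
    hence "aff_dim \<sigma> < aff_dim \<tau>" by (rule face_of_aff_dim_lt[OF fan_cone(3)[OF fan \<tau>] f2])
    moreover have "aff_dim \<tau> \<le> int CARD('n)" using aff_dim_le_DIM[of \<tau>] by simp
    ultimately show False using \<sigma>(2) by simp
  qed
qed

lemma full_dim_transfer:
  fixes \<Sigma>1 \<Sigma>2 :: "(real^'n) set set"
  assumes ae: "amply_equivalent \<Sigma>1 \<Sigma>2 \<Psi>" and \<sigma>1: "\<sigma>1 \<in> \<Sigma>1" "aff_dim \<sigma>1 = int CARD('n)"
  shows "\<exists>\<sigma>2\<in>\<Sigma>2. aff_dim \<sigma>2 = int CARD('n) \<and> (\<forall>\<rho>\<in>rays \<Sigma>1. \<rho> \<subseteq> \<sigma>1 \<longleftrightarrow> \<Psi> \<rho> \<subseteq> \<sigma>2)"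
proof -
  note p = ae_parts[OF ae]
  let ?\<Phi> = "inv_into (rays \<Sigma>1) \<Psi>"
  have PhiPsi: "?\<Phi> (\<Psi> \<rho>) = \<rho>" if "\<rho> \<in> rays \<Sigma>1" for \<rho>
    using p(5) that by (simp add: bij_betw_def inv_into_f_f)
  have Psi2: "\<Psi> \<rho> \<in> rays \<Sigma>2" if "\<rho> \<in> rays \<Sigma>1" for \<rho>
    using p(5) that by (auto simp: bij_betw_def)
  let ?c1 = "cone_rays \<Sigma>1 \<sigma>1"
  have c1: "?c1 \<subseteq> rays \<Sigma>1" by (auto simp: cone_rays_def)
  have "good \<Sigma>1 ?c1" using \<sigma>1(1) by (auto simp: good_def)
  hence "good \<Sigma>2 (\<Psi> ` ?c1)" by (rule good_transfer[OF ae c1])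
  then obtain \<sigma>2 where \<sigma>2: "\<sigma>2 \<in> \<Sigma>2" "\<Psi> ` ?c1 \<subseteq> cone_rays \<Sigma>2 \<sigma>2" by (auto simp: good_def)
  let ?c2 = "cone_rays \<Sigma>2 \<sigma>2"
  have c2: "?c2 \<subseteq> rays \<Sigma>2" by (auto simp: cone_rays_def)
  have "good \<Sigma>2 ?c2" using \<sigma>2(1) by (auto simp: good_def)
  hence "good \<Sigma>1 (?\<Phi> ` ?c2)" by (rule good_transfer[OF ae_sym[OF ae] c2])
  then obtain \<sigma>3 where \<sigma>3: "\<sigma>3 \<in> \<Sigma>1" "?\<Phi> ` ?c2 \<subseteq> cone_rays \<Sigma>1 \<sigma>3" by (auto simp: good_def)
  have "?c1 \<subseteq> cone_rays \<Sigma>1 \<sigma>3"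
  proof
    fix \<rho> assume r: "\<rho> \<in> ?c1"
    hence "\<Psi> \<rho> \<in> ?c2" using \<sigma>2(2) by blast
    hence "?\<Phi> (\<Psi> \<rho>) \<in> cone_rays \<Sigma>1 \<sigma>3" using \<sigma>3(2) by blast
    thus "\<rho> \<in> cone_rays \<Sigma>1 \<sigma>3" using PhiPsi r c1 by auto
  qed
  hence "\<sigma>1 = \<sigma>3" by (rule full_dim_unique[OF p(1) \<sigma>1 \<sigma>3(1)])
  have iff: "\<rho> \<subseteq> \<sigma>1 \<longleftrightarrow> \<Psi> \<rho> \<subseteq> \<sigma>2" if r: "\<rho> \<in> rays \<Sigma>1" for \<rho>
  proof
    assume "\<rho> \<subseteq> \<sigma>1"
    hence "\<rho> \<in> ?c1" using r by (simp add: cone_rays_def)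
    hence "\<Psi> \<rho> \<in> ?c2" using \<sigma>2(2) by blast
    thus "\<Psi> \<rho> \<subseteq> \<sigma>2" by (simp add: cone_rays_def)
  next
    assume "\<Psi> \<rho> \<subseteq> \<sigma>2"
    hence "\<Psi> \<rho> \<in> ?c2" using Psi2[OF r] by (simp add: cone_rays_def)
    hence "?\<Phi> (\<Psi> \<rho>) \<in> cone_rays \<Sigma>1 \<sigma>3" using \<sigma>3(2) by blast
    hence "\<rho> \<in> cone_rays \<Sigma>1 \<sigma>1" using PhiPsi[OF r] \<open>\<sigma>1 = \<sigma>3\<close> by simp
    thus "\<rho> \<subseteq> \<sigma>1" by (simp add: cone_rays_def)
  qed
  obtain M k M' k' where MM: "k > 0" "\<forall>\<rho>\<in>rays \<Sigma>1. M *v prim_gen \<rho> = real k *\<^sub>R prim_gen (\<Psi> \<rho>)"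
    "k' > 0" "\<And>v. M *v (M' *v v) = (real k * real k') *\<^sub>R v"
    by (rule ae_matrices[OF ae]) blast
  have sp1: "span (prim_gen ` ?c1) = UNIV" by (rule full_dim_span[OF p(1) \<sigma>1])
  have img: "(\<lambda>x. M *v x) ` (prim_gen ` ?c1) \<subseteq> span (prim_gen ` ?c2)"
  proof
    fix y assume "y \<in> (\<lambda>x. M *v x) ` (prim_gen ` ?c1)"
    then obtain \<rho> where r: "\<rho> \<in> ?c1" "y = M *v prim_gen \<rho>" by blast
    hence "y = real k *\<^sub>R prim_gen (\<Psi> \<rho>)" using MM(2) c1 by auto
    moreover have "\<Psi> \<rho> \<in> ?c2" using r \<sigma>2(2) by blast
    ultimately show "y \<in> span (prim_gen ` ?c2)" by (simp add: span_mul span_base)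
  qed
  have sp2: "span (prim_gen ` ?c2) = UNIV"
  proof -
    have "v \<in> span (prim_gen ` ?c2)" for v
    proof -
      define w where "w = (1 / (real k * real k')) *\<^sub>R (M' *v v)"
      have "M *v w = v" using MM(1,3) by (simp add: w_def matrix_vector_mult_scaleR MM(4))
      moreover have "M *v w \<in> (\<lambda>x. M *v x) ` span (prim_gen ` ?c1)" using sp1 by simp
      hence "M *v w \<in> span ((\<lambda>x. M *v x) ` (prim_gen ` ?c1))"
        by (simp add: span_linear_image)
      hence "M *v w \<in> span (span (prim_gen ` ?c2))" using span_mono[OF img] by blast
      ultimately show ?thesis by (simp add: span_span)
    qed
    thus ?thesis by blast
  qed
  have "prim_gen ` ?c2 \<subseteq> \<sigma>2" using pg_in_cone[OF p(2)] by blast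
  hence "span \<sigma>2 = UNIV" using sp2 span_mono by (metis top.extremum_uniqueI)
  hence "dim \<sigma>2 = CARD('n)" using dim_eq_full by (metis DIM_cart DIM_real mult_1_right)
  hence "aff_dim \<sigma>2 = int CARD('n)" using aff_dim_0_in[OF fan_cone(2)[OF p(2) \<sigma>2(1)]] by simp
  thus ?thesis using \<sigma>2(1) iff by blast
qed

lemma transpose_lattice:
  assumes "\<forall>i j. M$i$j \<in> \<int>" "m \<in> lattice"
  shows "transpose M *v m \<in> lattice"
  using assms by (auto simp: lattice_def matrix_vector_mult_def transpose_def intro!: Ints_sum Ints_mult)

lemma transpose_rat:
  fixes M :: "real^'n^'n" and m :: "real^'n"
  assumes "\<forall>i j. M$i$j \<in> \<int>" "\<forall>i. m $ i \<in> \<rat>"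
  shows "\<forall>i. ((1 / real k) *\<^sub>R (transpose M *v m)) $ i \<in> \<rat>"
proof
  fix i
  have "M$j$i \<in> \<rat>" for j using assms(1) Ints_subset_Rats by blast
  hence "(transpose M *v m) $ i \<in> \<rat>"
    using assms(2) by (auto simp: matrix_vector_mult_def transpose_def intro!: Rats_sum Rats_mult)
  moreover have "((1 / real k) *\<^sub>R (transpose M *v m)) $ i = (1 / real k) * (transpose M *v m) $ i"
    by simp
  ultimately show "((1 / real k) *\<^sub>R (transpose M *v m)) $ i \<in> \<rat>" by (simp only: Rats_mult Rats_divide Rats_1 Rats_of_nat)
qed

lemma qdiv_transfer:
  assumes ae: "amply_equivalent \<Sigma>1 \<Sigma>2 \<Psi>" and "Qdiv \<Sigma>2 a"
  shows "Qdiv \<Sigma>1 (pullback \<Sigma>1 \<Psi> a)"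
  using assms by (auto simp: Qdiv_def pullback_def)

lemma principal_transfer:
  fixes \<Sigma>1 \<Sigma>2 :: "(real^'n) set set"
  assumes ae: "amply_equivalent \<Sigma>1 \<Sigma>2 \<Psi>" and d: "principal \<Sigma>2 d"
  shows "principal \<Sigma>1 (pullback \<Sigma>1 \<Psi> d)"
proof -
  note p = ae_parts[OF ae]
  obtain M k where Mk: "k > 0" "\<forall>i j. M$i$j \<in> \<int>"
    "\<forall>\<rho>\<in>rays \<Sigma>1. M *v prim_gen \<rho> = real k *\<^sub>R prim_gen (\<Psi> \<rho>)"
    using ae_matrix[OF ae] by blast
  obtain m where m: "\<forall>i. m $ i \<in> \<rat>" "\<forall>\<rho>\<in>rays \<Sigma>2. d \<rho> = inner m (prim_gen \<rho>)"
    using d by (auto simp: principal_def)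
  define m1 where "m1 = (1 / real k) *\<^sub>R (transpose M *v m)"
  show ?thesis unfolding principal_def
  proof (intro exI[of _ m1] conjI ballI)
    show "\<forall>i. m1 $ i \<in> \<rat>" unfolding m1_def by (rule transpose_rat[OF Mk(2) m(1)])
    fix \<rho> assume r: "\<rho> \<in> rays \<Sigma>1"
    have r2: "\<Psi> \<rho> \<in> rays \<Sigma>2" using p(5) r by (auto simp: bij_betw_def)
    have "inner m1 (prim_gen \<rho>) = (1 / real k) * inner (transpose M *v m) (prim_gen \<rho>)"
      by (simp only: m1_def inner_scaleR_left)
    also have "\<dots> = (1 / real k) * inner m (M *v prim_gen \<rho>)"
      by (simp only: inner_transpose)
    also have "\<dots> = inner m (prim_gen (\<Psi> \<rho>))" using Mk(1,3) r by simp
    also have "\<dots> = pullback \<Sigma>1 \<Psi> d \<rho>" using m(2) r2 r by (simp add: pullback_def)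
    finally show "pullback \<Sigma>1 \<Psi> d \<rho> = inner m1 (prim_gen \<rho>)" by simp
  qed
qed

lemma cartier_transfer:
  fixes \<Sigma>1 \<Sigma>2 :: "(real^'n) set set"
  assumes ae: "amply_equivalent \<Sigma>1 \<Sigma>2 \<Psi>" and D: "cartier \<Sigma>2 D"
  shows "\<exists>k::nat. k > 0 \<and> cartier \<Sigma>1 (\<lambda>\<rho>. real k * pullback \<Sigma>1 \<Psi> D \<rho>) \<and>
           (ample \<Sigma>2 D \<longrightarrow> ample \<Sigma>1 (\<lambda>\<rho>. real k * pullback \<Sigma>1 \<Psi> D \<rho>))"
proof -
  note p = ae_parts[OF ae]
  obtain M k where Mk: "k > 0" "\<forall>i j. M$i$j \<in> \<int>"
    "\<forall>\<rho>\<in>rays \<Sigma>1. M *v prim_gen \<rho> = real k *\<^sub>R prim_gen (\<Psi> \<rho>)"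
    using ae_matrix[OF ae] by blast
  have Psi2: "\<Psi> \<rho> \<in> rays \<Sigma>2" if "\<rho> \<in> rays \<Sigma>1" for \<rho>
    using p(5) that by (auto simp: bij_betw_def)
  let ?D1 = "\<lambda>\<rho>. real k * pullback \<Sigma>1 \<Psi> D \<rho>"
  have key: "inner (transpose M *v m) (prim_gen \<rho>) = real k * inner m (prim_gen (\<Psi> \<rho>))"
    if "\<rho> \<in> rays \<Sigma>1" for m \<rho>
  proof -
    have "inner (transpose M *v m) (prim_gen \<rho>) = inner m (M *v prim_gen \<rho>)" by (rule inner_transpose)
    also have "\<dots> = real k * inner m (prim_gen (\<Psi> \<rho>))" using Mk(3) that by simp
    finally show ?thesis .
  qed
  have D1: "?D1 \<rho> = real k * D (\<Psi> \<rho>)" if "\<rho> \<in> rays \<Sigma>1" for \<rho>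
    using that by (simp add: pullback_def)
  have cart: "cartier \<Sigma>1 ?D1"
    unfolding cartier_def
  proof (intro conjI allI impI ballI)
    fix \<rho>
    show "?D1 \<rho> \<in> \<int>" using D by (auto simp: cartier_def pullback_def)
    show "\<rho> \<notin> rays \<Sigma>1 \<Longrightarrow> ?D1 \<rho> = 0" by (simp add: pullback_def)
  next
    fix \<sigma>1 assume s1: "\<sigma>1 \<in> \<Sigma>1"
    have c1: "cone_rays \<Sigma>1 \<sigma>1 \<subseteq> rays \<Sigma>1" by (auto simp: cone_rays_def)
    have "good \<Sigma>1 (cone_rays \<Sigma>1 \<sigma>1)" using s1 by (auto simp: good_def)
    hence "good \<Sigma>2 (\<Psi> ` cone_rays \<Sigma>1 \<sigma>1)" by (rule good_transfer[OF ae c1])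
    then obtain \<sigma>2 where s2: "\<sigma>2 \<in> \<Sigma>2" "\<Psi> ` cone_rays \<Sigma>1 \<sigma>1 \<subseteq> cone_rays \<Sigma>2 \<sigma>2"
      by (auto simp: good_def)
    obtain m where m: "m \<in> lattice" "\<forall>\<rho>\<in>cone_rays \<Sigma>2 \<sigma>2. inner m (prim_gen \<rho>) = - D \<rho>"
      using D s2(1) by (auto simp: cartier_def)
    show "\<exists>m\<in>lattice. \<forall>\<rho>\<in>cone_rays \<Sigma>1 \<sigma>1. inner m (prim_gen \<rho>) = - ?D1 \<rho>"
    proof (intro bexI[of _ "transpose M *v m"] ballI)
      show "transpose M *v m \<in> lattice" by (rule transpose_lattice[OF Mk(2) m(1)])
      fix \<rho> assume r: "\<rho> \<in> cone_rays \<Sigma>1 \<sigma>1"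
      hence r1: "\<rho> \<in> rays \<Sigma>1" using c1 by blast
      have "\<Psi> \<rho> \<in> cone_rays \<Sigma>2 \<sigma>2" using r s2(2) by blast
      hence im: "inner m (prim_gen (\<Psi> \<rho>)) = - D (\<Psi> \<rho>)" using m(2) by blast
      have "inner (transpose M *v m) (prim_gen \<rho>) = real k * inner m (prim_gen (\<Psi> \<rho>))"
        by (rule key[OF r1])
      also have "\<dots> = - (real k * D (\<Psi> \<rho>))" by (simp add: im)
      also have "\<dots> = - ?D1 \<rho>" by (simp only: D1[OF r1])
      finally show "inner (transpose M *v m) (prim_gen \<rho>) = - ?D1 \<rho>" .
    qed
  qed
  have amp: "ample \<Sigma>1 ?D1" if A: "ample \<Sigma>2 D"
    unfolding ample_def
  proof (intro ballI impI)
    fix \<sigma>1 assume s1: "\<sigma>1 \<in> \<Sigma>1" "aff_dim \<sigma>1 = int CARD('n)"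
    obtain \<sigma>2 where s2: "\<sigma>2 \<in> \<Sigma>2" "aff_dim \<sigma>2 = int CARD('n)"
      "\<forall>\<rho>\<in>rays \<Sigma>1. \<rho> \<subseteq> \<sigma>1 \<longleftrightarrow> \<Psi> \<rho> \<subseteq> \<sigma>2"
      using full_dim_transfer[OF ae s1] by blast
    obtain m where m: "m \<in> lattice" "\<forall>\<rho>\<in>rays \<Sigma>2.
        (\<rho> \<subseteq> \<sigma>2 \<longrightarrow> inner m (prim_gen \<rho>) = - D \<rho>) \<and>
        (\<not> \<rho> \<subseteq> \<sigma>2 \<longrightarrow> inner m (prim_gen \<rho>) > - D \<rho>)"
      using A s2(1,2) unfolding ample_def by blast
    show "\<exists>m\<in>lattice. \<forall>\<rho>\<in>rays \<Sigma>1.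
        (\<rho> \<subseteq> \<sigma>1 \<longrightarrow> inner m (prim_gen \<rho>) = - ?D1 \<rho>) \<and>
        (\<not> \<rho> \<subseteq> \<sigma>1 \<longrightarrow> inner m (prim_gen \<rho>) > - ?D1 \<rho>)"
    proof (intro bexI[of _ "transpose M *v m"] ballI conjI impI)
      show "transpose M *v m \<in> lattice" by (rule transpose_lattice[OF Mk(2) m(1)])
      fix \<rho> assume r1: "\<rho> \<in> rays \<Sigma>1"
      note mm = m(2)[rule_format, OF Psi2[OF r1]]
      {
        assume "\<rho> \<subseteq> \<sigma>1"
        hence "\<Psi> \<rho> \<subseteq> \<sigma>2" using s2(3) r1 by blast
        hence im: "inner m (prim_gen (\<Psi> \<rho>)) = - D (\<Psi> \<rho>)" using mm by blast
        have "inner (transpose M *v m) (prim_gen \<rho>) = real k * inner m (prim_gen (\<Psi> \<rho>))"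
          by (rule key[OF r1])
        also have "\<dots> = - (real k * D (\<Psi> \<rho>))" by (simp add: im)
        also have "\<dots> = - ?D1 \<rho>" by (simp only: D1[OF r1])
        finally show "inner (transpose M *v m) (prim_gen \<rho>) = - ?D1 \<rho>" .
      next
        assume "\<not> \<rho> \<subseteq> \<sigma>1"
        hence "\<not> \<Psi> \<rho> \<subseteq> \<sigma>2" using s2(3) r1 by blast
        hence "inner m (prim_gen (\<Psi> \<rho>)) > - D (\<Psi> \<rho>)" using mm by blast
        hence "real k * inner m (prim_gen (\<Psi> \<rho>)) > real k * (- D (\<Psi> \<rho>))"
          using Mk(1) by (intro mult_strict_left_mono) simp_all
        hence "real k * inner m (prim_gen (\<Psi> \<rho>)) > - ?D1 \<rho>"
          by (simp only: D1[OF r1])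
        thus "inner (transpose M *v m) (prim_gen \<rho>) > - ?D1 \<rho>"
          by (simp only: key[OF r1])
      }
    qed
  qed
  show ?thesis using Mk(1) cart amp by blast
qed

lemma pb_inv:
  fixes \<Sigma>1 \<Sigma>2 :: "(real^'n) set set"
  assumes ae: "amply_equivalent \<Sigma>1 \<Sigma>2 \<Psi>" and b: "\<And>\<rho>. \<rho> \<notin> rays \<Sigma>1 \<Longrightarrow> b \<rho> = 0"
  shows "pullback \<Sigma>1 \<Psi> (pullback \<Sigma>2 (inv_into (rays \<Sigma>1) \<Psi>) b) = b"
proof
  fix \<rho>
  note p = ae_parts[OF ae]
  show "pullback \<Sigma>1 \<Psi> (pullback \<Sigma>2 (inv_into (rays \<Sigma>1) \<Psi>) b) \<rho> = b \<rho>"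
  proof (cases "\<rho> \<in> rays \<Sigma>1")
    case True
    have "\<Psi> \<rho> \<in> rays \<Sigma>2" using p(5) True by (auto simp: bij_betw_def)
    moreover have "inv_into (rays \<Sigma>1) \<Psi> (\<Psi> \<rho>) = \<rho>"
      using p(5) True by (simp add: bij_betw_def inv_into_f_f)
    ultimately show ?thesis using True by (simp add: pullback_def)
  next
    case False thus ?thesis using b by (simp add: pullback_def)
  qed
qed

lemma pb_inv':
  fixes \<Sigma>1 \<Sigma>2 :: "(real^'n) set set"
  assumes ae: "amply_equivalent \<Sigma>1 \<Sigma>2 \<Psi>" and a: "\<And>\<rho>. \<rho> \<notin> rays \<Sigma>2 \<Longrightarrow> a \<rho> = 0"
  shows "pullback \<Sigma>2 (inv_into (rays \<Sigma>1) \<Psi>) (pullback \<Sigma>1 \<Psi> a) = a"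
proof
  fix \<rho>
  note p = ae_parts[OF ae]
  show "pullback \<Sigma>2 (inv_into (rays \<Sigma>1) \<Psi>) (pullback \<Sigma>1 \<Psi> a) \<rho> = a \<rho>"
  proof (cases "\<rho> \<in> rays \<Sigma>2")
    case True
    have "inv_into (rays \<Sigma>1) \<Psi> \<rho> \<in> rays \<Sigma>1"
      using bij_betw_inv_into[OF p(5)] True by (auto simp: bij_betw_def)
    moreover have "\<Psi> (inv_into (rays \<Sigma>1) \<Psi> \<rho>) = \<rho>"
      using p(5) True by (simp add: bij_betw_def f_inv_into_f)
    ultimately show ?thesis using True by (simp add: pullback_def)
  next
    case False thus ?thesis using a by (simp add: pullback_def)
  qed
qed

lemma pb_diff: "pullback \<Sigma> \<Psi> (\<lambda>\<rho>. b \<rho> - a \<rho>) = (\<lambda>\<rho>. pullback \<Sigma> \<Psi> b \<rho> - pullback \<Sigma> \<Psi> a \<rho>)"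
  by (auto simp: pullback_def)

lemma pb_scale: "pullback \<Sigma> \<Psi> (\<lambda>\<rho>. c * D \<rho>) = (\<lambda>\<rho>. c * pullback \<Sigma> \<Psi> D \<rho>)"
  by (auto simp: pullback_def)

lemma cls_transfer:
  fixes \<Sigma>1 \<Sigma>2 :: "(real^'n) set set"
  assumes ae: "amply_equivalent \<Sigma>1 \<Sigma>2 \<Psi>" and a: "Qdiv \<Sigma>2 a"
  shows "phi_star \<Sigma>1 \<Psi> (cls \<Sigma>2 a) = cls \<Sigma>1 (pullback \<Sigma>1 \<Psi> a)"
proof
  show "phi_star \<Sigma>1 \<Psi> (cls \<Sigma>2 a) \<subseteq> cls \<Sigma>1 (pullback \<Sigma>1 \<Psi> a)"
  proof
    fix c assume "c \<in> phi_star \<Sigma>1 \<Psi> (cls \<Sigma>2 a)"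
    then obtain b where b: "Qdiv \<Sigma>2 b" "principal \<Sigma>2 (\<lambda>\<rho>. b \<rho> - a \<rho>)" "c = pullback \<Sigma>1 \<Psi> b"
      by (auto simp: phi_star_def cls_def)
    have "Qdiv \<Sigma>1 c" using qdiv_transfer[OF ae b(1)] b(3) by simp
    moreover have "principal \<Sigma>1 (\<lambda>\<rho>. c \<rho> - pullback \<Sigma>1 \<Psi> a \<rho>)"
      using principal_transfer[OF ae b(2)] b(3) by (simp add: pb_diff)
    ultimately show "c \<in> cls \<Sigma>1 (pullback \<Sigma>1 \<Psi> a)" by (simp add: cls_def)
  qed
next
  show "cls \<Sigma>1 (pullback \<Sigma>1 \<Psi> a) \<subseteq> phi_star \<Sigma>1 \<Psi> (cls \<Sigma>2 a)"
  proof
    fix c assume "c \<in> cls \<Sigma>1 (pullback \<Sigma>1 \<Psi> a)"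
    hence c: "Qdiv \<Sigma>1 c" "principal \<Sigma>1 (\<lambda>\<rho>. c \<rho> - pullback \<Sigma>1 \<Psi> a \<rho>)" by (auto simp: cls_def)
    note ae' = ae_sym[OF ae]
    let ?\<Phi> = "inv_into (rays \<Sigma>1) \<Psi>"
    define b where "b = pullback \<Sigma>2 ?\<Phi> c"
    have "Qdiv \<Sigma>2 b" unfolding b_def by (rule qdiv_transfer[OF ae' c(1)])
    moreover have "principal \<Sigma>2 (\<lambda>\<rho>. b \<rho> - a \<rho>)"
    proof -
      have "principal \<Sigma>2 (pullback \<Sigma>2 ?\<Phi> (\<lambda>\<rho>. c \<rho> - pullback \<Sigma>1 \<Psi> a \<rho>))"
        by (rule principal_transfer[OF ae' c(2)])
      moreover have "pullback \<Sigma>2 ?\<Phi> (pullback \<Sigma>1 \<Psi> a) = a"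
        using pb_inv'[OF ae] a by (simp add: Qdiv_def)
      ultimately show ?thesis by (simp add: pb_diff b_def)
    qed
    ultimately have "b \<in> cls \<Sigma>2 a" by (simp add: cls_def)
    moreover have "pullback \<Sigma>1 \<Psi> b = c" unfolding b_def
      using pb_inv[OF ae] c(1) by (simp add: Qdiv_def)
    ultimately show "c \<in> phi_star \<Sigma>1 \<Psi> (cls \<Sigma>2 a)" unfolding phi_star_def by blast
  qed
qed

lemma qdiv_scale:
  assumes "cartier \<Sigma> D" "q \<in> \<rat>"
  shows "Qdiv \<Sigma> (\<lambda>\<rho>. q * D \<rho>)"
  using assms Ints_subset_Rats by (auto simp: Qdiv_def cartier_def intro!: Rats_mult)

lemma pic_transfer:
  fixes \<Sigma>1 \<Sigma>2 :: "(real^'n) set set"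
  assumes ae: "amply_equivalent \<Sigma>1 \<Sigma>2 \<Psi>"
  shows "phi_star \<Sigma>1 \<Psi> ` PicQ \<Sigma>2 \<subseteq> PicQ \<Sigma>1" "phi_star \<Sigma>1 \<Psi> ` AmpQ \<Sigma>2 \<subseteq> AmpQ \<Sigma>1"
proof -
  have main: "phi_star \<Sigma>1 \<Psi> (cls \<Sigma>2 (\<lambda>\<rho>. q * D \<rho>)) \<in>
      {cls \<Sigma>1 (\<lambda>\<rho>. q * D \<rho>) | q D. q \<in> \<rat> \<and> (P \<longrightarrow> q > 0) \<and> cartier \<Sigma>1 D \<and> (A \<longrightarrow> ample \<Sigma>1 D)}"
    if q: "q \<in> \<rat>" "P \<longrightarrow> q > 0" and D: "cartier \<Sigma>2 D" "A \<longrightarrow> ample \<Sigma>2 D" for q D P A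
  proof -
    obtain k :: nat where k: "k > 0" "cartier \<Sigma>1 (\<lambda>\<rho>. real k * pullback \<Sigma>1 \<Psi> D \<rho>)"
      "ample \<Sigma>2 D \<longrightarrow> ample \<Sigma>1 (\<lambda>\<rho>. real k * pullback \<Sigma>1 \<Psi> D \<rho>)"
      using cartier_transfer[OF ae D(1)] by blast
    have "phi_star \<Sigma>1 \<Psi> (cls \<Sigma>2 (\<lambda>\<rho>. q * D \<rho>)) = cls \<Sigma>1 (\<lambda>\<rho>. q * pullback \<Sigma>1 \<Psi> D \<rho>)"
      using cls_transfer[OF ae qdiv_scale[OF D(1) q(1)]] by (simp add: pb_scale)
    also have "(\<lambda>\<rho>. q * pullback \<Sigma>1 \<Psi> D \<rho>) = (\<lambda>\<rho>. (q / real k) * (real k * pullback \<Sigma>1 \<Psi> D \<rho>))"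
      using k(1) by (auto simp: fun_eq_iff)
    finally show ?thesis using q k D(2) by (intro CollectI exI[of _ "q / real k"] exI[of _ "\<lambda>\<rho>. real k * pullback \<Sigma>1 \<Psi> D \<rho>"]) auto
  qed
  show "phi_star \<Sigma>1 \<Psi> ` PicQ \<Sigma>2 \<subseteq> PicQ \<Sigma>1"
  proof
    fix X assume "X \<in> phi_star \<Sigma>1 \<Psi> ` PicQ \<Sigma>2"
    then obtain q D where "q \<in> \<rat>" "cartier \<Sigma>2 D" "X = phi_star \<Sigma>1 \<Psi> (cls \<Sigma>2 (\<lambda>\<rho>. q * D \<rho>))"
      by (auto simp: PicQ_def)
    thus "X \<in> PicQ \<Sigma>1" using main[of q False D False] by (auto simp: PicQ_def)
  qed
  show "phi_star \<Sigma>1 \<Psi> ` AmpQ \<Sigma>2 \<subseteq> AmpQ \<Sigma>1"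
  proof
    fix X assume "X \<in> phi_star \<Sigma>1 \<Psi> ` AmpQ \<Sigma>2"
    then obtain q D where "q \<in> \<rat>" "q > 0" "cartier \<Sigma>2 D" "ample \<Sigma>2 D"
      "X = phi_star \<Sigma>1 \<Psi> (cls \<Sigma>2 (\<lambda>\<rho>. q * D \<rho>))"
      by (auto simp: AmpQ_def)
    thus "X \<in> AmpQ \<Sigma>1" using main[of q True D True] by (auto simp: AmpQ_def)
  qed
qed

lemma phi_inverse:
  fixes \<Sigma>1 \<Sigma>2 :: "(real^'n) set set"
  assumes ae: "amply_equivalent \<Sigma>1 \<Sigma>2 \<Psi>" and a: "Qdiv \<Sigma>1 a"
  shows "phi_star \<Sigma>1 \<Psi> (phi_star \<Sigma>2 (inv_into (rays \<Sigma>1) \<Psi>) (cls \<Sigma>1 a)) = cls \<Sigma>1 a"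
proof -
  note ae' = ae_sym[OF ae]
  have "phi_star \<Sigma>2 (inv_into (rays \<Sigma>1) \<Psi>) (cls \<Sigma>1 a) = cls \<Sigma>2 (pullback \<Sigma>2 (inv_into (rays \<Sigma>1) \<Psi>) a)"
    by (rule cls_transfer[OF ae' a])
  moreover have "Qdiv \<Sigma>2 (pullback \<Sigma>2 (inv_into (rays \<Sigma>1) \<Psi>) a)" by (rule qdiv_transfer[OF ae' a])
  ultimately show ?thesis using cls_transfer[OF ae] pb_inv[OF ae] a by (simp add: Qdiv_def)
qed

theorem proposition5p28:
  fixes \<Sigma>1 \<Sigma>2 :: "(real^'n) set set"
    and \<Psi> :: "(real^'n) set \<Rightarrow> (real^'n) set"
  assumes "complete_fan \<Sigma>1" and "complete_fan \<Sigma>2"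
    and "amply_equivalent \<Sigma>1 \<Sigma>2 \<Psi>"
  shows "(\<forall>a. Qdiv \<Sigma>2 a \<longrightarrow> phi_star \<Sigma>1 \<Psi> (cls \<Sigma>2 a) = cls \<Sigma>1 (pullback \<Sigma>1 \<Psi> a))
       \<and> bij_betw (phi_star \<Sigma>1 \<Psi>) (ClQ \<Sigma>2) (ClQ \<Sigma>1)
       \<and> phi_star \<Sigma>1 \<Psi> ` PicQ \<Sigma>2 = PicQ \<Sigma>1
       \<and> phi_star \<Sigma>1 \<Psi> ` AmpQ \<Sigma>2 = AmpQ \<Sigma>1"
proof -
  note ae = assms(3)
  note ae' = ae_sym[OF ae]
  let ?\<Phi> = "inv_into (rays \<Sigma>1) \<Psi>"
  have c1: "\<forall>a. Qdiv \<Sigma>2 a \<longrightarrow> phi_star \<Sigma>1 \<Psi> (cls \<Sigma>2 a) = cls \<Sigma>1 (pullback \<Sigma>1 \<Psi> a)"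
    using cls_transfer[OF ae] by blast
  have c2: "bij_betw (phi_star \<Sigma>1 \<Psi>) (ClQ \<Sigma>2) (ClQ \<Sigma>1)"
  proof (rule bij_betw_byWitness[where f'="phi_star \<Sigma>2 ?\<Phi>"])
    show "\<forall>X\<in>ClQ \<Sigma>2. phi_star \<Sigma>2 ?\<Phi> (phi_star \<Sigma>1 \<Psi> X) = X"
    proof
      fix X assume "X \<in> ClQ \<Sigma>2"
      then obtain a where a: "Qdiv \<Sigma>2 a" "X = cls \<Sigma>2 a" by (auto simp: ClQ_def)
      have "?\<Phi> \<rho> \<in> rays \<Sigma>1" if "\<rho> \<in> rays \<Sigma>2" for \<rho>
        using bij_betw_inv_into[OF ae_parts(5)[OF ae]] that by (auto simp: bij_betw_def)
      have "inv_into (rays \<Sigma>2) ?\<Phi> \<rho> = \<Psi> \<rho>" if "\<rho> \<in> rays \<Sigma>1" for \<rho>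
        using ae_parts(5)[OF ae] that by (metis bij_betw_def bij_betw_inv_into_left inv_into_inv_into_eq)
      hence eqv: "phi_star \<Sigma>1 (inv_into (rays \<Sigma>2) ?\<Phi>) = phi_star \<Sigma>1 \<Psi>"
        by (auto simp: phi_star_def pullback_def fun_eq_iff intro!: image_cong)
      show "phi_star \<Sigma>2 ?\<Phi> (phi_star \<Sigma>1 \<Psi> X) = X"
        using phi_inverse[OF ae' a(1)] a(2) eqv by simp
    qed
    show "\<forall>Y\<in>ClQ \<Sigma>1. phi_star \<Sigma>1 \<Psi> (phi_star \<Sigma>2 ?\<Phi> Y) = Y"
    proof
      fix Y assume "Y \<in> ClQ \<Sigma>1"
      then obtain a where a: "Qdiv \<Sigma>1 a" "Y = cls \<Sigma>1 a" by (auto simp: ClQ_def)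
      show "phi_star \<Sigma>1 \<Psi> (phi_star \<Sigma>2 ?\<Phi> Y) = Y" using phi_inverse[OF ae a(1)] a(2) by simp
    qed
    show "phi_star \<Sigma>1 \<Psi> ` ClQ \<Sigma>2 \<subseteq> ClQ \<Sigma>1"
      using cls_transfer[OF ae] qdiv_transfer[OF ae] by (auto simp: ClQ_def)
    show "phi_star \<Sigma>2 ?\<Phi> ` ClQ \<Sigma>1 \<subseteq> ClQ \<Sigma>2"
      using cls_transfer[OF ae'] qdiv_transfer[OF ae'] by (auto simp: ClQ_def)
  qed
  have bk: "phi_star \<Sigma>1 \<Psi> (phi_star \<Sigma>2 ?\<Phi> Y) = Y" if "Y \<in> PicQ \<Sigma>1 \<or> Y \<in> AmpQ \<Sigma>1" for Y
  proof -
    have "\<exists>q D. q \<in> \<rat> \<and> cartier \<Sigma>1 D \<and> Y = cls \<Sigma>1 (\<lambda>\<rho>. q * D \<rho>)"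
      using that
    proof
      assume "Y \<in> PicQ \<Sigma>1" thus ?thesis unfolding PicQ_def by blast
    next
      assume "Y \<in> AmpQ \<Sigma>1" thus ?thesis unfolding AmpQ_def by blast
    qed
    then obtain q D where "q \<in> \<rat>" "cartier \<Sigma>1 D" "Y = cls \<Sigma>1 (\<lambda>\<rho>. q * D \<rho>)"
      by blast
    thus ?thesis using phi_inverse[OF ae qdiv_scale] by simp
  qed
  have c3: "phi_star \<Sigma>1 \<Psi> ` PicQ \<Sigma>2 = PicQ \<Sigma>1"
  proof
    show "phi_star \<Sigma>1 \<Psi> ` PicQ \<Sigma>2 \<subseteq> PicQ \<Sigma>1" by (rule pic_transfer(1)[OF ae])
    show "PicQ \<Sigma>1 \<subseteq> phi_star \<Sigma>1 \<Psi> ` PicQ \<Sigma>2"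
    proof
      fix Y assume Y: "Y \<in> PicQ \<Sigma>1"
      have "phi_star \<Sigma>2 ?\<Phi> Y \<in> PicQ \<Sigma>2" using pic_transfer(1)[OF ae'] Y by blast
      thus "Y \<in> phi_star \<Sigma>1 \<Psi> ` PicQ \<Sigma>2" using bk[of Y] Y by (metis image_eqI)
    qed
  qed
  have c4: "phi_star \<Sigma>1 \<Psi> ` AmpQ \<Sigma>2 = AmpQ \<Sigma>1"
  proof
    show "phi_star \<Sigma>1 \<Psi> ` AmpQ \<Sigma>2 \<subseteq> AmpQ \<Sigma>1" by (rule pic_transfer(2)[OF ae])
    show "AmpQ \<Sigma>1 \<subseteq> phi_star \<Sigma>1 \<Psi> ` AmpQ \<Sigma>2"
    proof
      fix Y assume Y: "Y \<in> AmpQ \<Sigma>1"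
      have "phi_star \<Sigma>2 ?\<Phi> Y \<in> AmpQ \<Sigma>2" using pic_transfer(2)[OF ae'] Y by blast
      thus "Y \<in> phi_star \<Sigma>1 \<Psi> ` AmpQ \<Sigma>2" using bk[of Y] Y by (metis image_eqI)
    qed
  qed
  show ?thesis using c1 c2 c3 c4 by blast
qed

end
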